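(* Let $m_0>0$ be the constant (depending only on $\mu,\Delta_0,\lambda_0$) for which, for every $k\in\mathbb N$, finite interval $\Lambda$, $\ell\in\mathbb N$ and nonempty $S_1,\dots,S_{k+1}\subset\Lambda$ with pairwise distances $\ge2\ell+1$, one has $\mathbb E\|P^\Lambda_{I_{\le k}}\prod_{i}P_-^{S_i}\|\le C_k\max_i\Upsilon_{S_i}|\Lambda|^{2k+1}e^{-m_0\ell}$. Let $\Lambda\subset\mathbb Z$ be a finite interval, $T$ an observable supported on an interval $\mathcal X\subset\Lambda$ with $\|T\|\le1$, $k,\ell\in\mathbb N$, and assume $\operatorname{dist}(\mathcal X,\mathbb Z\setminus\Lambda)>9(k+1)\ell+1$. For $j=1,\dots,k+1$ define $$T_j=T\,P_+^{\partial_{3\ell}[\mathcal X]^\Lambda_{9j\ell}}\prod_{i=1}^{j-1}P_-^{\partial_{3\ell}[\mathcal X]^\Lambda_{9i\ell}}$$ (empty product $=I$). Then $$T_j=P_+^{\partial_{3\ell}[\mathcal X]^\Lambda_{9j\ell}}T_jP_+^{\partial_{3\ell}[\mathcal X]^\Lambda_{9j\ell}}=P_+^{\partial^{out}_{3\ell}[\mathcal X]^\Lambda_{9j\ell}}\otimes P_+^{\partial^{in}_{3\ell}[\mathcal X]^\Lambda_{9j\ell}}\otimes T\prod_{i=1}^{j-1}P_-^{\partial_{3\ell}[\mathcal X]^\Lambda_{9i\ell}},$$ $T_j$ is supported in $[\mathcal X]^\Lambda_{(9j+3)\ell}$, $T\prod_{i=1}^{j-1}P_-^{\partial_{3\ell}[\mathcal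 X]^\Lambda_{9i\ell}}$ is supported in $[\mathcal X]^\Lambda_{(9j-6)\ell}$, and $$\mathbb E\Big\|\Big(T-\sum_{j=1}^{k+1}T_j\Big)_{P^\Lambda_{I_{\le k}}}\Big\|\le C_k|\Lambda|^{2k+1}e^{-m_0\ell}.$$
   Context: Spin chain setup. For $i\in\mathbb Z$ let $\mathcal H_i$ be a copy of $\mathbb C^2$; $\sigma^x,\sigma^y,\sigma^z$ Pauli matrices, $\sigma^\pm=\frac12(\sigma^x\pm i\sigma^y)$, $\mathcal N=\frac12(I-\sigma^z)$, subscript $i$ = action on $\mathcal H_i$. For finite $\Lambda\subset\mathbb Z$, $\mathcal H_\Lambda=\bigotimes_{i\in\Lambda}\mathcal H_i$; operators on $\mathcal H_S$, $S\subset\Lambda$, are identified with $T\otimes I_{\mathcal H_{\Lambda\setminus S}}$, and an observable is supported in $S$ if of this form. $H^\Lambda=\sum_{\{i,i+1\}\subset\Lambda}h_{i,i+1}+\sum_{i\in\Lambda}\mathcal N_i+\lambda\sum_{i\in\Lambda}\omega_i\mathcal N_i$, $h_{i,i+1}=-\mathcal N_i\mathcal N_{i+1}-\frac1{2\Delta}(\sigma_i^+\sigma_{i+1}^-+\sigma_i^-\sigma_{i+1}^+)$, $\Delta>1$, $\lambda>0$, $\{\omega_i\}$ i.i.d. with law $\mu$ absolutely continuous with bounded density, $\{0,1\}\subset\operatorname{supp}\mu\subset[0,1]$; $\mathbb E$ = expectation. Standing: $\Delta\ge\Delta_0>9$, $\lambda\ge\lambda_0>0$; constants depend on $\mu,\Delta_0,\lambda_0,k$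 only. Notation: $P_+^S=\bigotimes_{i\in S}(I-\mathcal N_i)$, $P_-^S=I-P_+^S$. $\Upsilon_S$ = number of maximal subintervals of $S$. $\operatorname{dist}_\Lambda(x,y)=|x-y|$. For $M\subset\Lambda$, $s\in\mathbb N_0$: $[M]^\Lambda_s=\{x\in\Lambda:\operatorname{dist}(x,M)\le s\}$; for $s\in\mathbb N$: $\partial^{out}_sM=[M]^\Lambda_s\setminus M$, $\partial^{in}_sM=\{x\in M:\operatorname{dist}(x,\Lambda\setminus M)\le s\}$, $\partial_sM=\partial^{in}_sM\cup\partial^{out}_sM$. $P^\Lambda_I=\chi_I(H^\Lambda)$, $(T)_Y=YTY^*$, $I_{\le k}=(-\infty,(k+\frac34)(1-\frac1\Delta)]$. *)

theory Defs
  imports "HOL-Probability.Probability"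
begin

text \<open>A basis vector of H_Lambda (tensor product of copies of C^2 over Lambda) is identified
  with the set x of sites i in Lambda carrying the state with N_i = 1 (spin down); so the basis
  of H_Lambda is Pow Lambda.  An operator on H_Lambda is its matrix with respect to this basis;
  entries outside Pow Lambda are irrelevant.\<close>

type_synonym cfg = "int set"
type_synonym op = "cfg \<Rightarrow> cfg \<Rightarrow> complex"

definition opeq :: "int set \<Rightarrow> op \<Rightarrow> op \<Rightarrow> bool" where
  "opeq L A B \<longleftrightarrow> (\<forall>x\<in>Pow L. \<forall>y\<in>Pow L. A x y = B x y)"

definition idop :: op where "idop = (\<lambda>x y. if x = y then 1 else 0)"
definition opadd :: "op \<Rightarrow> op \<Rightarrow> op" where "opadd A B = (\<lambda>x y. A x y + B x y)"
definition opsub :: "op \<Rightarrow> op \<Rightarrow> op" where "opsub A B = (\<lambda>x y. A x y - B x y)"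
definition opscale :: "complex \<Rightarrow> op \<Rightarrow> op" where "opscale c A = (\<lambda>x y. c * A x y)"
definition opsum :: "('i \<Rightarrow> op) \<Rightarrow> 'i set \<Rightarrow> op" where
  "opsum F I = (\<lambda>x y. \<Sum>i\<in>I. F i x y)"
definition opmul :: "int set \<Rightarrow> op \<Rightarrow> op \<Rightarrow> op" where
  "opmul L A B = (\<lambda>x y. \<Sum>z\<in>Pow L. A x z * B z y)"
definition adj :: "op \<Rightarrow> op" where "adj A = (\<lambda>x y. cnj (A y x))"
definition opprod :: "int set \<Rightarrow> op list \<Rightarrow> op" where
  "opprod L As = foldr (opmul L) As idop"

definition conjop :: "int set \<Rightarrow> op \<Rightarrow> op \<Rightarrow> op" where
  "conjop L T Y = opmul L (opmul L Y T) (adj Y)"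

definition apply_op :: "int set \<Rightarrow> op \<Rightarrow> (cfg \<Rightarrow> complex) \<Rightarrow> (cfg \<Rightarrow> complex)" where
  "apply_op L A v = (\<lambda>x. \<Sum>y\<in>Pow L. A x y * v y)"
definition vnorm :: "int set \<Rightarrow> (cfg \<Rightarrow> complex) \<Rightarrow> real" where
  "vnorm L v = sqrt (\<Sum>x\<in>Pow L. (cmod (v x))\<^sup>2)"
definition opnorm :: "int set \<Rightarrow> op \<Rightarrow> real" where
  "opnorm L A = Sup {vnorm L (apply_op L A v) | v. vnorm L v \<le> 1}"

text \<open>T (an operator on H_Lambda) is supported in S: it is of the form T' tensor I_{Lambda - S}.\<close>
definition supp_in :: "int set \<Rightarrow> int set \<Rightarrow> op \<Rightarrow> bool" where
  "supp_in L S A \<longleftrightarrow> S \<subseteq> L \<and> (\<exists>B::op. \<forall>x\<in>Pow L. \<forall>y\<in>Pow L.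
      A x y = (if x - S = y - S then B (x \<inter> S) (y \<inter> S) else 0))"

text \<open>N_i = (I - sigma^z_i)/2, sigma^+_i (lowers N_i from 1 to 0), sigma^-_i (raises it).\<close>
definition occN :: "int \<Rightarrow> op" where
  "occN i = (\<lambda>x y. if x = y \<and> i \<in> x then 1 else 0)"
definition sigp :: "int \<Rightarrow> op" where
  "sigp i = (\<lambda>x y. if i \<in> y \<and> x = y - {i} then 1 else 0)"
definition sigm :: "int \<Rightarrow> op" where
  "sigm i = (\<lambda>x y. if i \<notin> y \<and> x = insert i y then 1 else 0)"

text \<open>P_+^S = tensor over i in S of (I - N_i);  P_-^S = I - P_+^S\<close>
definition Pplus :: "int set \<Rightarrow> op" where
  "Pplus S = (\<lambda>x y. if x = y \<and> x \<inter> S = {} then 1 else 0)"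
definition Pminus :: "int set \<Rightarrow> op" where
  "Pminus S = opsub idop (Pplus S)"

definition hterm :: "int set \<Rightarrow> real \<Rightarrow> int \<Rightarrow> op" where
  "hterm L Del i = opsub (opscale (-1) (opmul L (occN i) (occN (i+1))))
     (opscale (complex_of_real (1 / (2 * Del)))
        (opadd (opmul L (sigp i) (sigm (i+1))) (opmul L (sigm i) (sigp (i+1)))))"

definition Ham :: "int set \<Rightarrow> real \<Rightarrow> real \<Rightarrow> (int \<Rightarrow> real) \<Rightarrow> op" where
  "Ham L Del lam \<omega> =
     opadd (opsum (hterm L Del) {i. i \<in> L \<and> i + 1 \<in> L})
       (opadd (opsum occN L)
          (opscale (complex_of_real lam) (opsum (\<lambda>i. opscale (complex_of_real (\<omega> i)) (occN i)) L)))"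

text \<open>Real eigenvalues of an operator on H_Lambda (for Hermitian H: its whole spectrum).\<close>
definition spec :: "int set \<Rightarrow> op \<Rightarrow> real set" where
  "spec L H = {e. \<exists>v. (\<exists>x\<in>Pow L. v x \<noteq> 0) \<and>
                       (\<forall>x\<in>Pow L. apply_op L H v x = complex_of_real e * v x)}"

text \<open>chi_I(H) = sum over eigenvalues e in I of the spectral projection of e, the latter being
  the Lagrange interpolation polynomial prod_{e' ~= e} (H - e')/(e - e') evaluated at H.\<close>
definition specproj :: "int set \<Rightarrow> op \<Rightarrow> real \<Rightarrow> op" where
  "specproj L H e = opprod L (map (\<lambda>e'. opscale (complex_of_real (1 / (e - e')))
                                  (opsub H (opscale (complex_of_real e') idop)))
                              (sorted_list_of_set (spec L H - {e})))"
definition chi :: "int set \<Rightarrow> real set \<Rightarrow> op \<Rightarrow> op" where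
  "chi L I H = opsum (specproj L H) (spec L H \<inter> I)"

definition Ile :: "nat \<Rightarrow> real \<Rightarrow> real set" where
  "Ile k Del = {..(real k + 3/4) * (1 - 1 / Del)}"

definition fin_interval :: "int set \<Rightarrow> bool" where
  "fin_interval S \<longleftrightarrow> (\<exists>a b. a \<le> b \<and> S = {a..b})"

definition setdist :: "int set \<Rightarrow> int set \<Rightarrow> real" where
  "setdist A B = Inf {real_of_int \<bar>x - y\<bar> | x y. x \<in> A \<and> y \<in> B}"

definition nbhd :: "int set \<Rightarrow> int set \<Rightarrow> nat \<Rightarrow> int set" where
  "nbhd L M s = {x \<in> L. \<exists>y\<in>M. \<bar>x - y\<bar> \<le> int s}"
definition bd_out :: "int set \<Rightarrow> nat \<Rightarrow> int set \<Rightarrow> int set" where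
  "bd_out L s M = nbhd L M s - M"
definition bd_in :: "int set \<Rightarrow> nat \<Rightarrow> int set \<Rightarrow> int set" where
  "bd_in L s M = {x \<in> M. \<exists>y\<in>L - M. \<bar>x - y\<bar> \<le> int s}"
definition bd :: "int set \<Rightarrow> nat \<Rightarrow> int set \<Rightarrow> int set" where
  "bd L s M = bd_in L s M \<union> bd_out L s M"

definition Upsilon :: "int set \<Rightarrow> nat" where
  "Upsilon S = card {I. fin_interval I \<and> I \<subseteq> S \<and>
                        (\<forall>J. fin_interval J \<and> I \<subseteq> J \<and> J \<subseteq> S \<longrightarrow> J = I)}"

definition supp_measure :: "real measure \<Rightarrow> real set" where
  "supp_measure M = {x. \<forall>e>0. measure M (ball x e) > 0}"

definition admissible_law :: "real measure \<Rightarrow> bool" where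
  "admissible_law \<mu> \<longleftrightarrow> prob_space \<mu> \<and> sets \<mu> = sets borel \<and>
     (\<exists>f D. f \<in> borel_measurable borel \<and> (\<forall>x. f x \<le> ennreal D) \<and> \<mu> = density lborel f) \<and>
     {0, 1} \<subseteq> supp_measure \<mu> \<and> supp_measure \<mu> \<subseteq> {0..1}"

definition Expect :: "real measure \<Rightarrow> int set \<Rightarrow> ((int \<Rightarrow> real) \<Rightarrow> real) \<Rightarrow> ennreal" where
  "Expect \<mu> L F = (\<integral>\<^sup>+ \<omega>. ennreal (F \<omega>) \<partial>(PiM L (\<lambda>_. \<mu>)))"

end

theory Submission
  imports Defs "HOL-Library.Function_Algebras" "HOL-Computational_Algebra.Fundamental_Theorem_Algebra"
begin


lemma finite_PowL: "finite L \<Longrightarrow> finite (Pow L)" by simp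

lemma apply_op_cong: "(\<And>y. y \<in> Pow L \<Longrightarrow> v y = w y) \<Longrightarrow> apply_op L A v = apply_op L A w"
  unfolding apply_op_def by (intro ext sum.cong) auto

lemma apply_op_opeq: "opeq L A B \<Longrightarrow> x \<in> Pow L \<Longrightarrow> apply_op L A v x = apply_op L B v x"
  unfolding apply_op_def opeq_def by (intro sum.cong) auto

lemma vnorm_cong: "(\<And>y. y \<in> Pow L \<Longrightarrow> v y = w y) \<Longrightarrow> vnorm L v = vnorm L w"
  unfolding vnorm_def by (intro arg_cong[where f=sqrt] sum.cong) auto

lemma opnorm_opeq: "opeq L A B \<Longrightarrow> opnorm L A = opnorm L B"
proof -
  assume h: "opeq L A B"
  have "vnorm L (apply_op L A v) = vnorm L (apply_op L B v)" for v
    by (rule vnorm_cong) (simp add: apply_op_opeq[OF h])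
  then show ?thesis unfolding opnorm_def by simp
qed

lemma opeq_refl[simp]: "opeq L A A" by (simp add: opeq_def)
lemma opeq_sym: "opeq L A B \<Longrightarrow> opeq L B A" by (simp add: opeq_def)
lemma opeq_trans: "opeq L A B \<Longrightarrow> opeq L B C \<Longrightarrow> opeq L A C" by (simp add: opeq_def)

lemma opmul_cong: "opeq L A A' \<Longrightarrow> opeq L B B' \<Longrightarrow> opeq L (opmul L A B) (opmul L A' B')"
  unfolding opeq_def opmul_def by (auto intro!: sum.cong)

lemma opmul_assoc: "opmul L (opmul L A B) C = opmul L A (opmul L B C)"
  unfolding opmul_def
  by (auto intro!: ext simp: sum_distrib_left sum_distrib_right mult.assoc intro: sum.swap)

lemma apply_op_opmul: "apply_op L (opmul L A B) v = apply_op L A (apply_op L B v)"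
  unfolding opmul_def apply_op_def
  by (auto intro!: ext simp: sum_distrib_left sum_distrib_right mult.assoc intro: sum.swap)

lemma vnorm_nonneg: "vnorm L v \<ge> 0" unfolding vnorm_def by (simp add: sum_nonneg)

lemma vnorm_sq: "finite L \<Longrightarrow> (vnorm L v)^2 = (\<Sum>x\<in>Pow L. (cmod (v x))^2)"
  unfolding vnorm_def by (simp add: sum_nonneg)

lemma vnorm_L2: "vnorm L v = L2_set (\<lambda>x. cmod (v x)) (Pow L)"
  unfolding vnorm_def L2_set_def by simp

lemma vnorm_ge_entry: "finite L \<Longrightarrow> y \<in> Pow L \<Longrightarrow> cmod (v y) \<le> vnorm L v"
  unfolding vnorm_L2 by (rule member_le_L2_set) auto

lemma vnorm_zero: "finite L \<Longrightarrow> vnorm L v = 0 \<Longrightarrow> y \<in> Pow L \<Longrightarrow> v y = 0"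
  using vnorm_ge_entry[of L y v] by simp

lemma vnorm_scale: "vnorm L (\<lambda>x. c * v x) = cmod c * vnorm L v"
  unfolding vnorm_def
  by (simp add: norm_mult power_mult_distrib sum_distrib_left[symmetric] real_sqrt_mult)

lemma apply_op_scale: "apply_op L A (\<lambda>x. c * v x) = (\<lambda>x. c * apply_op L A v x)"
  unfolding apply_op_def by (auto intro!: ext simp: sum_distrib_left algebra_simps)

lemma apply_op_add: "apply_op L A (\<lambda>x. v x + w x) = (\<lambda>x. apply_op L A v x + apply_op L A w x)"
  unfolding apply_op_def by (auto intro!: ext simp: sum.distrib algebra_simps)

lemma apply_op_diff: "apply_op L A (\<lambda>x. v x - w x) = (\<lambda>x. apply_op L A v x - apply_op L A w x)"
  unfolding apply_op_def by (auto intro!: ext simp: sum_subtractf algebra_simps)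

lemma apply_op_sum: "apply_op L A (\<lambda>x. \<Sum>i\<in>F. f i x) = (\<lambda>x. \<Sum>i\<in>F. apply_op L A (f i) x)"
  unfolding apply_op_def by (auto intro!: ext simp: sum_distrib_left intro: sum.swap)

lemma apply_op_zero: "apply_op L A (\<lambda>x. 0) = (\<lambda>x. 0)"
  unfolding apply_op_def by simp

lemma opnorm_bdd: 
  assumes "finite L"
  shows "bdd_above {vnorm L (apply_op L A v) | v. vnorm L v \<le> 1}"
proof -
  define r where "r x = (\<Sum>y\<in>Pow L. cmod (A x y))" for x
  have "vnorm L (apply_op L A v) \<le> vnorm L r" if "vnorm L v \<le> 1" for v
  proof -
    have "cmod (apply_op L A v x) \<le> r x" for x
    proof -
      have "cmod (apply_op L A v x) \<le> (\<Sum>y\<in>Pow L. cmod (A x y * v y))"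
        unfolding apply_op_def by (rule norm_sum)
      also have "\<dots> \<le> (\<Sum>y\<in>Pow L. cmod (A x y))"
      proof (rule sum_mono)
        fix y assume "y \<in> Pow L"
        then have "cmod (v y) \<le> 1" using vnorm_ge_entry[OF assms, of y v] that by simp
        then show "cmod (A x y * v y) \<le> cmod (A x y)"
          by (simp add: norm_mult mult_left_le)
      qed
      finally show ?thesis unfolding r_def .
    qed
    moreover have "r x \<ge> 0" for x unfolding r_def by (simp add: sum_nonneg)
    ultimately show ?thesis unfolding vnorm_def
      by (intro real_sqrt_le_mono sum_mono power_mono) auto
  qed
  then show ?thesis unfolding bdd_above_def by blast
qed

lemma opnorm_nonneg: "finite L \<Longrightarrow> opnorm L A \<ge> 0"
proof -
  assume f: "finite L"
  have "vnorm L (apply_op L A (\<lambda>x. 0)) \<in> {vnorm L (apply_op L A v) | v. vnorm L v \<le> 1}"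
    by (auto simp: vnorm_def)
  moreover have "vnorm L (apply_op L A (\<lambda>x. 0)) = 0"
    by (simp add: apply_op_zero vnorm_def)
  ultimately show ?thesis unfolding opnorm_def
    using cSup_upper[OF _ opnorm_bdd[OF f]] by fastforce
qed

lemma opnorm_bound:
  assumes f: "finite L"
  shows "vnorm L (apply_op L A v) \<le> opnorm L A * vnorm L v"
proof (cases "vnorm L v = 0")
  case True
  then have "apply_op L A v = apply_op L A (\<lambda>x. 0)"
    by (intro apply_op_cong) (simp add: vnorm_zero[OF f])
  then show ?thesis using True by (simp add: apply_op_zero vnorm_def)
next
  case False
  then have pos: "vnorm L v > 0" using vnorm_nonneg[of L v] by simp
  define u where "u = (\<lambda>x. complex_of_real (1 / vnorm L v) * v x)"
  have nu: "vnorm L u = 1" unfolding u_def vnorm_scale using pos by (simp add: norm_divide)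
  have "vnorm L (apply_op L A u) \<le> opnorm L A"
    unfolding opnorm_def using nu by (intro cSup_upper[OF _ opnorm_bdd[OF f]]) auto
  moreover have "apply_op L A v = (\<lambda>x. complex_of_real (vnorm L v) * apply_op L A u x)"
    unfolding u_def apply_op_scale using pos by (auto simp: algebra_simps)
  ultimately show ?thesis using pos by (simp add: vnorm_scale mult.commute)
qed

lemma opnorm_le:
  assumes f: "finite L" and c: "c \<ge> 0" and h: "\<And>v. vnorm L (apply_op L A v) \<le> c * vnorm L v"
  shows "opnorm L A \<le> c"
  unfolding opnorm_def
proof (rule cSup_least)
  show "{vnorm L (apply_op L A v) | v. vnorm L v \<le> 1} \<noteq> {}" by (auto simp: vnorm_def intro!: exI[of _ "\<lambda>x. 0"])
  fix r assume "r \<in> {vnorm L (apply_op L A v) | v. vnorm L v \<le> 1}"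
  then obtain v where "r = vnorm L (apply_op L A v)" "vnorm L v \<le> 1" by auto
  then show "r \<le> c" using h[of v] c by (meson dual_order.trans mult_left_le)
qed

lemma opnorm_mul:
  assumes f: "finite L"
  shows "opnorm L (opmul L A B) \<le> opnorm L A * opnorm L B"
proof (rule opnorm_le[OF f])
  show "0 \<le> opnorm L A * opnorm L B" using opnorm_nonneg[OF f] by simp
  fix v
  have "vnorm L (apply_op L (opmul L A B) v) \<le> opnorm L A * vnorm L (apply_op L B v)"
    unfolding apply_op_opmul by (rule opnorm_bound[OF f])
  also have "\<dots> \<le> opnorm L A * (opnorm L B * vnorm L v)"
    by (intro mult_left_mono opnorm_bound[OF f] opnorm_nonneg[OF f])
  finally show "vnorm L (apply_op L (opmul L A B) v) \<le> opnorm L A * opnorm L B * vnorm L v"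
    by (simp add: mult.assoc)
qed


definition ip :: "int set \<Rightarrow> (cfg \<Rightarrow> complex) \<Rightarrow> (cfg \<Rightarrow> complex) \<Rightarrow> complex" where
  "ip L v w = (\<Sum>x\<in>Pow L. v x * cnj (w x))"

lemma ip_adj: "ip L (apply_op L A u) w = ip L u (apply_op L (adj A) w)"
  unfolding ip_def apply_op_def adj_def
  by (auto simp: sum_distrib_left sum_distrib_right mult_ac cnj_sum intro: sum.swap)

lemma ip_self: "ip L v v = complex_of_real ((vnorm L v)^2)"
proof -
  have "(vnorm L v)^2 = (\<Sum>x\<in>Pow L. (cmod (v x))^2)"
    unfolding vnorm_def by (simp add: sum_nonneg)
  then show ?thesis unfolding ip_def
    by (auto simp: of_real_sum complex_norm_square simp del: of_real_power)
qed

lemma ip_cs: "cmod (ip L v w) \<le> vnorm L v * vnorm L w"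
proof -
  have "cmod (ip L v w) \<le> (\<Sum>x\<in>Pow L. cmod (v x * cnj (w x)))"
    unfolding ip_def by (rule norm_sum)
  also have "\<dots> = (\<Sum>x\<in>Pow L. \<bar>cmod (v x)\<bar> * \<bar>cmod (w x)\<bar>)"
    by (simp add: norm_mult)
  also have "\<dots> \<le> vnorm L v * vnorm L w"
    unfolding vnorm_L2 by (rule L2_set_mult_ineq)
  finally show ?thesis .
qed

lemma ip_cong: "(\<And>x. x \<in> Pow L \<Longrightarrow> v x = v' x) \<Longrightarrow> (\<And>x. x \<in> Pow L \<Longrightarrow> w x = w' x) \<Longrightarrow>
  ip L v w = ip L v' w'"
  unfolding ip_def by (intro sum.cong) auto

lemma ip_scale_left: "ip L (\<lambda>x. c * v x) w = c * ip L v w"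
  unfolding ip_def by (simp add: sum_distrib_left mult.assoc)
lemma ip_scale_right: "ip L v (\<lambda>x. c * w x) = cnj c * ip L v w"
  unfolding ip_def by (simp add: sum_distrib_left mult_ac)
lemma ip_sum_left: "ip L (\<lambda>x. \<Sum>i\<in>F. f i x) w = (\<Sum>i\<in>F. ip L (f i) w)"
  unfolding ip_def sum_distrib_right by (rule sum.swap)
lemma ip_sum_right: "ip L v (\<lambda>x. \<Sum>i\<in>F. f i x) = (\<Sum>i\<in>F. ip L v (f i))"
  unfolding ip_def cnj_sum sum_distrib_left by (rule sum.swap)

lemma opnorm_adj:
  assumes f: "finite L"
  shows "opnorm L (adj A) \<le> opnorm L A"
proof (rule opnorm_le[OF f opnorm_nonneg[OF f]])
  fix v
  define u where "u = apply_op L (adj A) v"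
  have "(vnorm L u)^2 = cmod (ip L u u)" by (simp add: ip_self norm_power)
  also have "ip L u u = ip L (apply_op L A u) v" unfolding u_def by (simp add: ip_adj)
  also have "cmod \<dots> \<le> vnorm L (apply_op L A u) * vnorm L v" by (rule ip_cs)
  also have "\<dots> \<le> opnorm L A * vnorm L u * vnorm L v"
    by (intro mult_right_mono opnorm_bound[OF f] vnorm_nonneg)
  finally have h: "(vnorm L u)^2 \<le> opnorm L A * vnorm L u * vnorm L v" .
  show "vnorm L u \<le> opnorm L A * vnorm L v"
  proof (cases "vnorm L u = 0")
    case True then show ?thesis using opnorm_nonneg[OF f, of A] vnorm_nonneg[of L v] by simp
  next
    case False
    then have "vnorm L u > 0" using vnorm_nonneg[of L u] by simp
    then show ?thesis using h by (simp add: power2_eq_square mult_ac)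
  qed
qed

definition herm :: "int set \<Rightarrow> op \<Rightarrow> bool" where
  "herm L H \<longleftrightarrow> (\<forall>x\<in>Pow L. \<forall>y\<in>Pow L. H x y = cnj (H y x))"

lemma herm_adj: "herm L H \<Longrightarrow> opeq L (adj H) H"
  unfolding herm_def opeq_def adj_def by metis

lemma herm_ip: "herm L H \<Longrightarrow> ip L (apply_op L H v) w = ip L v (apply_op L H w)"
  unfolding ip_adj by (intro ip_cong) (auto simp: apply_op_opeq[OF herm_adj])



lemma sum_fun_app: "(\<Sum>a\<in>A. F a) x = (\<Sum>a\<in>A. F a x)"
  by (induct A rule: infinite_finite_induct) auto

lemma dep_lemma:
  fixes g :: "nat \<Rightarrow> 'a \<Rightarrow> complex"
  assumes fV: "finite V" and n: "card V \<le> n"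
  shows "\<exists>c. (\<exists>j\<le>n. c j \<noteq> 0) \<and> (\<forall>x\<in>V. (\<Sum>j\<le>n. c j * g j x) = 0)"
proof -
  interpret fvs: vector_space "\<lambda>(c::complex) (f::'a \<Rightarrow> complex) x. c * f x"
    by unfold_locales (auto simp: algebra_simps plus_fun_def)
  define rv where "rv f = (\<lambda>x. if x \<in> V then f x else 0)" for f :: "'a \<Rightarrow> complex"
  show ?thesis
  proof (cases "inj_on (\<lambda>j. rv (g j)) {..n}")
    case False
    then obtain i j where ij: "i \<le> n" "j \<le> n" "i \<noteq> j" "rv (g i) = rv (g j)"
      unfolding inj_on_def by auto
    define c where "c k = (if k = i then 1 else if k = j then -1 else (0::complex))" for k
    have "(\<Sum>k\<le>n. c k * g k x) = g i x - g j x" for x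
    proof -
      have "(\<Sum>k\<le>n. c k * g k x) = (\<Sum>k\<in>{i,j}. c k * g k x)"
        by (rule sum.mono_neutral_right) (use ij in \<open>auto simp: c_def\<close>)
      then show ?thesis using ij by (simp add: c_def)
    qed
    moreover have "g i x = g j x" if "x \<in> V" for x
      using fun_cong[OF ij(4), of x] that by (simp add: rv_def)
    ultimately have "\<forall>x\<in>V. (\<Sum>k\<le>n. c k * g k x) = 0" by simp
    moreover have "\<exists>k\<le>n. c k \<noteq> 0" using ij by (intro exI[of _ i]) (simp add: c_def)
    ultimately show ?thesis by blast
  next
    case True
    define S where "S = (\<lambda>j. rv (g j)) ` {..n}"
    define d where "d y = (\<lambda>x. if x = y then 1 else (0::complex))" for y :: 'a
    define T where "T = d ` V"
    have cS: "card S = Suc n" unfolding S_def using True by (simp add: card_image)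
    have cT: "card T \<le> card V" unfolding T_def by (rule card_image_le[OF fV])
    have fT: "finite T" unfolding T_def using fV by (rule finite_imageI)
    have "S \<subseteq> fvs.span T"
    proof
      fix s assume "s \<in> S"
      then obtain j where s: "s = rv (g j)" unfolding S_def by auto
      have "s = (\<Sum>y\<in>V. (\<lambda>x. g j y * d y x))"
      proof
        fix x
        have "(\<Sum>y\<in>V. (\<lambda>x. g j y * d y x)) x = (\<Sum>y\<in>V. g j y * d y x)"
          by (rule sum_fun_app)
        also have "\<dots> = rv (g j) x"
          using fV by (simp add: d_def rv_def if_distrib[of "\<lambda>c. g j _ * c"] sum.delta cong: if_cong)
        finally show "s x = (\<Sum>y\<in>V. (\<lambda>x. g j y * d y x)) x" using s by simp
      qed
      also have "\<dots> \<in> fvs.span T"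
        by (intro fvs.span_sum fvs.span_scale fvs.span_base) (auto simp: T_def)
      finally show "s \<in> fvs.span T" .
    qed
    then have "\<not> fvs.independent S"
    proof (intro notI)
      assume "S \<subseteq> fvs.span T" "fvs.independent S"
      then have "card S \<le> card T" using fvs.independent_span_bound[OF fT, of S] by simp
      then show False using cS cT n by linarith
    qed
    moreover have fS: "finite S" unfolding S_def by simp
    ultimately have "fvs.dependent S" by simp
    from this[unfolded fvs.dependent_finite[OF fS]] obtain u where u0: "(\<exists>v\<in>S. u v \<noteq> 0)" "(\<Sum>v\<in>S. (\<lambda>x. u v * v x)) = 0"
      by blast
    define c where "c j = u (rv (g j))" for j
    have "(\<Sum>j\<le>n. (\<lambda>x. c j * rv (g j) x)) = 0"
      using u0(2) unfolding S_def c_def sum.reindex[OF True] by (simp add: o_def)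
    then have h2: "(\<Sum>j\<le>n. c j * rv (g j) x) = 0" for x
    proof -
      assume h: "(\<Sum>j\<le>n. (\<lambda>x. c j * rv (g j) x)) = 0"
      have "(\<Sum>j\<le>n. c j * rv (g j) x) = (\<Sum>j\<le>n. (\<lambda>x. c j * rv (g j) x)) x"
        by (rule sum_fun_app[symmetric])
      also have "\<dots> = 0" by (simp only: h zero_fun_def)
      finally show ?thesis .
    qed
    have A1: "\<forall>x\<in>V. (\<Sum>j\<le>n. c j * g j x) = 0"
    proof (intro ballI)
      fix x assume x: "x \<in> V"
      show "(\<Sum>j\<le>n. c j * g j x) = 0" using h2[of x] x by (simp add: rv_def)
    qed
    have A2: "\<exists>j\<le>n. c j \<noteq> 0" using u0(1) unfolding S_def c_def by auto
    show ?thesis by (intro exI[of _ c] conjI A1 A2)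
  qed
qed


lemma ip_diff_left: "ip L (\<lambda>x. a x - b x) w = ip L a w - ip L b w"
  unfolding ip_def by (simp add: sum_subtractf algebra_simps)

lemma ip_zero_left: "(\<And>x. x \<in> Pow L \<Longrightarrow> a x = 0) \<Longrightarrow> ip L a w = 0"
  unfolding ip_def by simp

lemma vnorm_pos: "finite L \<Longrightarrow> x0 \<in> Pow L \<Longrightarrow> w x0 \<noteq> 0 \<Longrightarrow> vnorm L w > 0"
  using vnorm_ge_entry[of L x0 w] by (smt (verit) zero_less_norm_iff)

lemma ip_self_nz: "finite L \<Longrightarrow> x0 \<in> Pow L \<Longrightarrow> w x0 \<noteq> 0 \<Longrightarrow> ip L w w \<noteq> 0"
  using vnorm_pos[of L x0 w] by (simp add: ip_self)

lemma ip_self_zero: "finite L \<Longrightarrow> ip L r r = 0 \<Longrightarrow> x \<in> Pow L \<Longrightarrow> r x = 0"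
  using vnorm_zero[of L r x] by (simp add: ip_self)

lemma apply_op_idop: "finite L \<Longrightarrow> x \<in> Pow L \<Longrightarrow> apply_op L idop w x = w x"
proof -
  assume f: "finite L" and x: "x \<in> Pow L"
  have "apply_op L idop w x = (\<Sum>y\<in>Pow L. if x = y then w y else 0)"
    unfolding apply_op_def idop_def by (rule sum.cong) auto
  also have "\<dots> = w x" using x f by (simp add: sum.delta')
  finally show ?thesis .
qed

lemma apply_op_opsum: "finite S \<Longrightarrow> apply_op L (opsum F S) v x = (\<Sum>s\<in>S. apply_op L (F s) v x)"
  unfolding apply_op_def opsum_def by (simp add: sum_distrib_right sum.swap[of _ S])

lemma real_of_cnj: "cnj z = z \<Longrightarrow> z = complex_of_real (Re z)"
  by (simp add: complex_eq_iff)

locale hs =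
  fixes L :: "int set" and H :: op
  assumes finL: "finite L" and hH: "herm L H"
begin

definition ceig :: "complex \<Rightarrow> (cfg \<Rightarrow> complex) \<Rightarrow> bool" where
  "ceig z w \<longleftrightarrow> (\<forall>x\<in>Pow L. apply_op L H w x = z * w x)"

lemma spec_iff: "e \<in> spec L H \<longleftrightarrow> (\<exists>v. (\<exists>x\<in>Pow L. v x \<noteq> 0) \<and> ceig (of_real e) v)"
  unfolding spec_def ceig_def by simp

lemma ip_ceig_left: "ceig z w \<Longrightarrow> ip L (apply_op L H w) u = z * ip L w u"
  unfolding ceig_def by (subst ip_cong[where v'="\<lambda>x. z * w x" and w'=u]) (auto simp: ip_scale_left)

lemma ip_ceig_right: "ceig z w \<Longrightarrow> ip L u (apply_op L H w) = cnj z * ip L u w"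
  unfolding ceig_def by (subst ip_cong[where v'=u and w'="\<lambda>x. z * w x"]) (auto simp: ip_scale_right)

lemma ceig_real: assumes "ceig z w" "x0 \<in> Pow L" "w x0 \<noteq> 0" shows "cnj z = z"
proof -
  have "z * ip L w w = cnj z * ip L w w"
    using ip_ceig_left[OF assms(1), of w] ip_ceig_right[OF assms(1), of w] herm_ip[OF hH, of w w]
    by metis
  moreover have "ip L w w \<noteq> 0" using ip_self_nz[of L x0 w, OF finL assms(2) assms(3)] .
  ultimately show ?thesis by (metis mult_cancel_right)
qed

lemma eig_orth:
  assumes "ceig (of_real e) v" "ceig (of_real f) w" "e \<noteq> f"
  shows "ip L v w = 0"
proof -
  have "of_real e * ip L v w = of_real f * ip L v w"
    using ip_ceig_left[OF assms(1), of w] ip_ceig_right[OF assms(2), of v] herm_ip[OF hH, of v w]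
    by (metis complex_cnj_complex_of_real)
  then show ?thesis using assms(3) by simp
qed

lemma herm_sq:
  assumes z: "cnj z = z" and h: "ceig z (\<lambda>x. apply_op L H u x - z * u x)"
    and x: "x \<in> Pow L"
  shows "apply_op L H u x - z * u x = 0"
proof -
  define r where "r = (\<lambda>x. apply_op L H u x - z * u x)"
  have "ip L r r = ip L (apply_op L H u) r - ip L (\<lambda>x. z * u x) r"
    unfolding r_def by (rule ip_diff_left)
  also have "ip L (\<lambda>x. z * u x) r = z * ip L u r" by (rule ip_scale_left)
  also have "ip L (apply_op L H u) r = ip L u (apply_op L H r)" by (rule herm_ip[OF hH])
  also have "\<dots> = cnj z * ip L u r" using h unfolding r_def[symmetric] by (rule ip_ceig_right)
  finally have "ip L r r = 0" using z by simp
  then show ?thesis using ip_self_zero[OF finL _ x] unfolding r_def by blast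
qed

lemma spec_finite: "finite (spec L H)"
proof (rule ccontr)
  assume inf: "infinite (spec L H)"
  define N where "N = card (Pow L)"
  obtain B where B: "B \<subseteq> spec L H" "finite B" "card B = Suc N"
    using infinite_arbitrarily_large[OF inf] by blast
  obtain h where h: "bij_betw h {0..<Suc N} B" using ex_bij_betw_nat_finite[OF B(2)] B(3) by auto
  have "\<forall>e\<in>spec L H. \<exists>v. (\<exists>x\<in>Pow L. v x \<noteq> 0) \<and> ceig (of_real e) v" using spec_iff by blast
  then obtain W where W: "\<And>e. e \<in> spec L H \<Longrightarrow> (\<exists>x\<in>Pow L. W e x \<noteq> 0) \<and> ceig (of_real e) (W e)"
    by metis
  define g where "g j = W (h j)" for j
  have hB: "j \<le> N \<Longrightarrow> h j \<in> spec L H" for j using h B(1) unfolding bij_betw_def by auto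
  have hinj: "j \<le> N \<Longrightarrow> k \<le> N \<Longrightarrow> h j = h k \<Longrightarrow> j = k" for j k
    using h unfolding bij_betw_def inj_on_def by auto
  obtain c where c: "\<exists>j\<le>N. c j \<noteq> 0" "\<forall>x\<in>Pow L. (\<Sum>j\<le>N. c j * g j x) = 0"
    using dep_lemma[of "Pow L" N g] finL unfolding N_def by auto
  have "c k = 0" if k: "k \<le> N" for k
  proof -
    have "0 = ip L (\<lambda>x. \<Sum>j\<le>N. c j * g j x) (g k)"
      using c(2) by (intro ip_zero_left[symmetric]) auto
    also have "\<dots> = (\<Sum>j\<le>N. c j * ip L (g j) (g k))"
      unfolding ip_sum_left by (simp add: ip_scale_left)
    also have "\<dots> = (\<Sum>j\<le>N. if j = k then c k * ip L (g k) (g k) else 0)"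
    proof (rule sum.cong)
      fix j assume j: "j \<in> {..N}"
      show "c j * ip L (g j) (g k) = (if j = k then c k * ip L (g k) (g k) else 0)"
      proof (cases "j = k")
        case False
        then have "h j \<noteq> h k" using hinj j k by auto
        then have "ip L (g j) (g k) = 0" unfolding g_def
          using eig_orth[OF conjunct2[OF W[OF hB]] conjunct2[OF W[OF hB]]] j k by auto
        then show ?thesis using False by simp
      qed simp
    qed simp
    also have "\<dots> = c k * ip L (g k) (g k)" using k by simp
    finally have "c k * ip L (g k) (g k) = 0" by simp
    moreover have "ip L (g k) (g k) \<noteq> 0"
      using W[OF hB[OF k]] ip_self_nz[OF finL] unfolding g_def by blast
    ultimately show ?thesis by simp
  qed
  then show False using c(1) by auto
qed

end


context hs begin

definition Hp :: "nat \<Rightarrow> (cfg \<Rightarrow> complex) \<Rightarrow> (cfg \<Rightarrow> complex)" where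
  "Hp j v = ((apply_op L H) ^^ j) v"

lemma Hp_0[simp]: "Hp 0 v = v" by (simp add: Hp_def)
lemma Hp_Suc: "Hp (Suc j) v = apply_op L H (Hp j v)" by (simp add: Hp_def)

definition polyv :: "complex poly \<Rightarrow> (cfg \<Rightarrow> complex) \<Rightarrow> (cfg \<Rightarrow> complex)" where
  "polyv p v = (\<lambda>x. \<Sum>j\<le>degree p. coeff p j * Hp j v x)"

lemma polyv_lt: "degree p < n \<Longrightarrow> polyv p v x = (\<Sum>j<n. coeff p j * Hp j v x)"
  unfolding polyv_def
  by (rule sum.mono_neutral_left) (auto simp: coeff_eq_0)

lemma polyv_pCons: "polyv (pCons a p) v = (\<lambda>x. a * v x + apply_op L H (polyv p v) x)"
proof
  fix x
  define n where "n = Suc (degree p)"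
  have d1: "degree (pCons a p) < Suc n" unfolding n_def
    by (metis degree_pCons_le le_imp_less_Suc)
  have d2: "degree p < n" unfolding n_def by simp
  have "polyv (pCons a p) v x = (\<Sum>j<Suc n. coeff (pCons a p) j * Hp j v x)"
    by (rule polyv_lt[OF d1])
  also have "\<dots> = a * v x + (\<Sum>j<n. coeff p j * apply_op L H (Hp j v) x)"
    by (subst sum.lessThan_Suc_shift) (simp add: Hp_Suc)
  also have "(\<Sum>j<n. coeff p j * apply_op L H (Hp j v) x) = apply_op L H (polyv p v) x"
  proof -
    have "polyv p v = (\<lambda>y. \<Sum>j<n. coeff p j * Hp j v y)" using polyv_lt[OF d2] by auto
    then show ?thesis by (simp add: apply_op_sum apply_op_scale)
  qed
  finally show "polyv (pCons a p) v x = a * v x + apply_op L H (polyv p v) x" .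
qed

lemma polyv_0[simp]: "polyv 0 v = (\<lambda>x. 0)" by (simp add: polyv_def)

lemma polyv_add: "polyv (p + q) v = (\<lambda>x. polyv p v x + polyv q v x)"
proof
  fix x
  define n where "n = Suc (max (degree p) (degree q))"
  have "degree (p + q) < n" unfolding n_def using degree_add_le_max[of p q] by linarith
  moreover have "degree p < n" "degree q < n" unfolding n_def by auto
  ultimately show "polyv (p + q) v x = polyv p v x + polyv q v x"
    by (simp add: polyv_lt sum.distrib distrib_right)
qed

lemma polyv_smult: "polyv (smult c p) v = (\<lambda>x. c * polyv p v x)"
proof
  fix x
  define n where "n = Suc (degree p)"
  have "degree (smult c p) < n" unfolding n_def using degree_smult_le[of c p] by linarith
  moreover have "degree p < n" unfolding n_def by auto
  ultimately show "polyv (smult c p) v x = c * polyv p v x"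
    by (simp add: polyv_lt sum_distrib_left mult.assoc)
qed

lemma polyv_const: "polyv [:c:] v = (\<lambda>x. c * v x)"
  by (simp add: polyv_pCons apply_op_zero)

lemma polyv_lin: "polyv ([:-z, 1:] * p) v = (\<lambda>x. apply_op L H (polyv p v) x - z * polyv p v x)"
proof -
  have e: "[:-z, 1:] * p = smult (-z) p + pCons 0 p" by simp
  show ?thesis unfolding e polyv_add polyv_smult polyv_pCons by (rule ext) (simp add: algebra_simps)
qed

lemma polyv_eig: "ceig z w \<Longrightarrow> x \<in> Pow L \<Longrightarrow> polyv p w x = poly p z * w x"
proof (induction p arbitrary: x)
  case 0
  then show ?case by simp
next
  case (pCons a p)
  have "apply_op L H (polyv p w) = apply_op L H (\<lambda>y. poly p z * w y)"
    by (rule apply_op_cong) (use pCons in auto)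
  then have "apply_op L H (polyv p w) x = poly p z * (z * w x)"
    using pCons(3,4) by (simp add: apply_op_scale ceig_def)
  then show ?case by (simp add: polyv_pCons algebra_simps)
qed

lemma Hp_diff: "Hp j (\<lambda>x. v x - u x) = (\<lambda>x. Hp j v x - Hp j u x)"
  by (induction j) (simp_all add: Hp_Suc apply_op_diff)

lemma polyv_diff_v: "polyv p (\<lambda>x. v x - u x) = (\<lambda>x. polyv p v x - polyv p u x)"
  unfolding polyv_def by (simp add: Hp_diff sum_subtractf algebra_simps)

definition ES :: "(cfg \<Rightarrow> complex) \<Rightarrow> bool" where
  "ES v \<longleftrightarrow> (\<exists>f. (\<forall>e\<in>spec L H. ceig (of_real e) (f e)) \<and>
                 (\<forall>x\<in>Pow L. v x = (\<Sum>e\<in>spec L H. f e x)))"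

lemma ceig_zero: "ceig z (\<lambda>x. 0)" by (simp add: ceig_def apply_op_zero)

lemma ES_zero: "(\<And>x. x \<in> Pow L \<Longrightarrow> v x = 0) \<Longrightarrow> ES v"
  unfolding ES_def by (intro exI[of _ "\<lambda>e x. 0"]) (simp add: ceig_zero)

lemma ES_eig:
  assumes w: "ceig (of_real e) w" shows "ES w"
proof (cases "\<forall>x\<in>Pow L. w x = 0")
  case True then show ?thesis by (intro ES_zero) auto
next
  case False
  then have e: "e \<in> spec L H" using w spec_iff by blast
  define f where "f e' = (\<lambda>x. if e' = e then w x else 0)" for e'
  have "ceig (of_real e') (f e')" for e'
    by (cases "e' = e") (simp_all add: f_def w ceig_zero)
  moreover have "w x = (\<Sum>e'\<in>spec L H. f e' x)" for x
    unfolding f_def using e spec_finite by simp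
  ultimately show ?thesis unfolding ES_def by blast
qed

lemma ES_add: assumes "ES v" "ES u" shows "ES (\<lambda>x. v x + u x)"
proof -
  obtain f where f: "\<forall>e\<in>spec L H. ceig (of_real e) (f e)" "\<forall>x\<in>Pow L. v x = (\<Sum>e\<in>spec L H. f e x)"
    using assms(1) unfolding ES_def by blast
  obtain g where g: "\<forall>e\<in>spec L H. ceig (of_real e) (g e)" "\<forall>x\<in>Pow L. u x = (\<Sum>e\<in>spec L H. g e x)"
    using assms(2) unfolding ES_def by blast
  have "\<forall>e\<in>spec L H. ceig (of_real e) (\<lambda>x. f e x + g e x)"
    using f(1) g(1) by (simp add: ceig_def apply_op_add distrib_left)
  moreover have "\<forall>x\<in>Pow L. v x + u x = (\<Sum>e\<in>spec L H. f e x + g e x)"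
    using f(2) g(2) by (simp add: sum.distrib)
  ultimately show ?thesis unfolding ES_def by (intro exI[of _ "\<lambda>e x. f e x + g e x"]) simp
qed

lemma ES_cong: "ES v \<Longrightarrow> (\<And>x. x \<in> Pow L \<Longrightarrow> u x = v x) \<Longrightarrow> ES u"
  unfolding ES_def by auto

lemma ES_poly: "q \<noteq> 0 \<Longrightarrow> (\<forall>x\<in>Pow L. polyv q v x = 0) \<Longrightarrow> ES v"
proof (induction "degree q" arbitrary: q v rule: less_induct)
  case less
  show ?case
  proof (cases "degree q = 0")
    case True
    then obtain c where q: "q = [:c:]" by (rule degree_eq_zeroE)
    then have "c \<noteq> 0" using less.prems(1) by simp
    then show ?thesis using less.prems(2) unfolding q polyv_const by (intro ES_zero) auto
  next
    case False
    then have "\<not> constant (poly q)" using constant_degree[of q] by simp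
    then obtain z where "poly q z = 0" using fundamental_theorem_of_algebra by blast
    then obtain q1 where q1: "q = [:-z, 1:] * q1" using poly_eq_0_iff_dvd by (metis dvdE)
    have q1nz: "q1 \<noteq> 0" using less.prems(1) q1 by auto
    have dq: "degree q1 < degree q" unfolding q1 using q1nz by (subst degree_mult_eq) auto
    define w where "w = polyv q1 v"
    have hw: "\<forall>x\<in>Pow L. apply_op L H w x - z * w x = 0"
      using less.prems(2) unfolding q1 polyv_lin w_def by simp
    then have cw: "ceig z w" unfolding ceig_def by simp
    show ?thesis
    proof (cases "\<forall>x\<in>Pow L. w x = 0")
      case True
      then show ?thesis using less.hyps[OF dq q1nz] unfolding w_def by blast
    next
      case False
      then obtain x0 where x0: "x0 \<in> Pow L" "w x0 \<noteq> 0" by blast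
      have zr: "cnj z = z" by (rule ceig_real[OF cw x0])
      define e where "e = Re z"
      have ze: "z = of_real e" unfolding e_def by (rule real_of_cnj[OF zr])
      show ?thesis
      proof (cases "poly q1 z = 0")
        case True
        then obtain q2 where q2: "q1 = [:-z, 1:] * q2" using poly_eq_0_iff_dvd by (metis dvdE)
        have wq2: "w = (\<lambda>x. apply_op L H (polyv q2 v) x - z * polyv q2 v x)"
          unfolding w_def q2 polyv_lin ..
        then have "ceig z (\<lambda>x. apply_op L H (polyv q2 v) x - z * polyv q2 v x)" using cw by simp
        then have "apply_op L H (polyv q2 v) x0 - z * polyv q2 v x0 = 0"
          by (rule herm_sq[OF zr _ x0(1)])
        then show ?thesis using x0(2) wq2 by simp
      next
        case False
        define u where "u = (\<lambda>x. inverse (poly q1 z) * w x)"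
        have cu: "ceig (of_real e) u"
          using cw unfolding u_def ceig_def ze by (simp add: apply_op_scale)
        have "\<forall>x\<in>Pow L. polyv q1 (\<lambda>x. v x - u x) x = 0"
        proof
          fix x assume x: "x \<in> Pow L"
          have "polyv q1 u x = poly q1 z * u x" using polyv_eig[OF _ x] cu ze by simp
          then show "polyv q1 (\<lambda>x. v x - u x) x = 0"
            using False unfolding polyv_diff_v u_def w_def by simp
        qed
        then have "ES (\<lambda>x. v x - u x)" using less.hyps[OF dq q1nz] by blast
        then have "ES (\<lambda>x. (v x - u x) + u x)" using ES_add ES_eig[OF cu] by blast
        then show ?thesis by (rule ES_cong) simp
      qed
    qed
  qed
qed

lemma krylov: "\<exists>q. q \<noteq> 0 \<and> (\<forall>x\<in>Pow L. polyv q v x = 0)"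
proof -
  define N where "N = card (Pow L)"
  obtain c where c: "\<exists>j\<le>N. c j \<noteq> 0" "\<forall>x\<in>Pow L. (\<Sum>j\<le>N. c j * Hp j v x) = 0"
    using dep_lemma[of "Pow L" N "\<lambda>j. Hp j v"] finL unfolding N_def by auto
  define q where "q = (\<Sum>j\<le>N. monom (c j) j)"
  have cq: "coeff q j = (if j \<le> N then c j else 0)" for j
    unfolding q_def coeff_sum by (simp add: sum.delta)
  have qnz: "q \<noteq> 0" using c(1) cq by (metis coeff_0)
  have dq: "degree q < Suc N" using degree_le[of N q] cq by fastforce
  have "polyv q v x = (\<Sum>j\<le>N. c j * Hp j v x)" for x
  proof -
    have "polyv q v x = (\<Sum>j<Suc N. coeff q j * Hp j v x)" by (rule polyv_lt[OF dq])
    also have "\<dots> = (\<Sum>j\<le>N. c j * Hp j v x)"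
      unfolding lessThan_Suc_atMost by (rule sum.cong) (auto simp: cq)
    finally show ?thesis .
  qed
  then show ?thesis using c(2) qnz by auto
qed

theorem decomp: "ES v"
  using krylov[of v] ES_poly by blast

end


lemma apply_op_opscale: "apply_op L (opscale c A) v x = c * apply_op L A v x"
  unfolding apply_op_def opscale_def by (simp add: sum_distrib_left mult.assoc)

lemma apply_op_opsub: "apply_op L (opsub A B) v x = apply_op L A v x - apply_op L B v x"
  unfolding apply_op_def opsub_def by (simp add: sum_subtractf algebra_simps)

lemma apply_op_opadd: "apply_op L (opadd A B) v x = apply_op L A v x + apply_op L B v x"
  unfolding apply_op_def opadd_def by (simp add: sum.distrib algebra_simps)

lemma opprod_Cons: "opprod L (A # As) = opmul L A (opprod L As)"
  by (simp add: opprod_def)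
lemma opprod_Nil: "opprod L [] = idop"
  by (simp add: opprod_def)

lemma prod_list_ones: "(\<And>x. x \<in> set xs \<Longrightarrow> g x = 1) \<Longrightarrow> prod_list (map g xs) = (1::complex)"
  by (induction xs) auto

context hs begin

lemma apply_prod_G:
  assumes w: "ceig z w"
  shows "x \<in> Pow L \<Longrightarrow> apply_op L (opprod L (map (\<lambda>e'. opscale (a e') (opsub H (opscale (b e') idop))) es)) w x
     = (\<Prod>e'\<leftarrow>es. a e' * (z - b e')) * w x"
proof (induction es arbitrary: x)
  case Nil
  then show ?case by (simp add: opprod_Nil apply_op_idop[OF finL])
next
  case (Cons e' es)
  define C where "C = (\<Prod>e'\<leftarrow>es. a e' * (z - b e'))"
  define P where "P = opprod L (map (\<lambda>e'. opscale (a e') (opsub H (opscale (b e') idop))) es)"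
  have "apply_op L P w = apply_op L P w" ..
  have h1: "apply_op L (opscale (a e') (opsub H (opscale (b e') idop))) (apply_op L P w) =
        apply_op L (opscale (a e') (opsub H (opscale (b e') idop))) (\<lambda>y. C * w y)"
    by (rule apply_op_cong) (use Cons.IH in \<open>simp add: C_def P_def\<close>)
  have h2: "apply_op L (opscale (a e') (opsub H (opscale (b e') idop))) w x = a e' * (z - b e') * w x"
    using w Cons.prems unfolding ceig_def
    by (simp add: apply_op_opscale apply_op_opsub apply_op_idop[OF finL] algebra_simps)
  show ?case
    unfolding list.map opprod_Cons apply_op_opmul P_def[symmetric] h1 apply_op_scale
    using h2 by (simp add: C_def)
qed

lemma specproj_eig:
  assumes e: "e \<in> spec L H" and f: "f \<in> spec L H" and w: "ceig (of_real f) w" and x: "x \<in> Pow L"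
  shows "apply_op L (specproj L H e) w x = (if f = e then w x else 0)"
proof -
  define es where "es = sorted_list_of_set (spec L H - {e})"
  have ses: "set es = spec L H - {e}" unfolding es_def using spec_finite by simp
  have "apply_op L (specproj L H e) w x =
     (\<Prod>e'\<leftarrow>es. complex_of_real (1 / (e - e')) * (of_real f - of_real e')) * w x"
    unfolding specproj_def es_def[symmetric] by (rule apply_prod_G[OF w x])
  also have "\<dots> = (if f = e then w x else 0)"
  proof (cases "f = e")
    case True
    have "(\<Prod>e'\<leftarrow>es. complex_of_real (1 / (e - e')) * (of_real f - of_real e')) = 1"
    proof (rule prod_list_ones)
      fix e' assume "e' \<in> set es"
      then have "e' \<noteq> e" using ses by auto
      then show "complex_of_real (1 / (e - e')) * (of_real f - of_real e') = 1"
        using True by (simp add: field_simps flip: of_real_diff)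
    qed
    then show ?thesis using True by simp
  next
    case False
    then have "f \<in> set es" using ses f by auto
    then have "(\<Prod>e'\<leftarrow>es. complex_of_real (1 / (e - e')) * (of_real f - of_real e')) = 0"
      unfolding prod_list_zero_iff by force
    then show ?thesis using False by simp
  qed
  finally show ?thesis .
qed

lemma chi_apply:
  assumes fv: "\<forall>e\<in>spec L H. ceig (of_real e) (fv e)" "\<forall>x\<in>Pow L. v x = (\<Sum>e\<in>spec L H. fv e x)"
    and x: "x \<in> Pow L"
  shows "apply_op L (chi L I H) v x = (\<Sum>s\<in>spec L H \<inter> I. fv s x)"
proof -
  have "apply_op L (specproj L H s) v x = fv s x" if s: "s \<in> spec L H" for s
  proof -
    have "apply_op L (specproj L H s) v = apply_op L (specproj L H s) (\<lambda>y. \<Sum>e\<in>spec L H. fv e y)"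
      by (rule apply_op_cong) (use fv in auto)
    then have "apply_op L (specproj L H s) v x = (\<Sum>e\<in>spec L H. apply_op L (specproj L H s) (fv e) x)"
      by (simp add: apply_op_sum)
    also have "\<dots> = (\<Sum>e\<in>spec L H. if e = s then fv e x else 0)"
      by (rule sum.cong) (use specproj_eig[OF s _ _ x] fv in auto)
    also have "\<dots> = fv s x" using s spec_finite by simp
    finally show ?thesis .
  qed
  then show ?thesis unfolding chi_def using spec_finite
    by (simp add: apply_op_opsum)
qed

lemma ip_orth_sum:
  assumes F: "F \<subseteq> spec L H" and fv: "\<forall>e\<in>spec L H. ceig (of_real e) (fv e)"
  shows "ip L (\<lambda>x. \<Sum>s\<in>F. fv s x) (\<lambda>x. \<Sum>s\<in>F. fv s x) = (\<Sum>s\<in>F. ip L (fv s) (fv s))"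
proof -
  have fF: "finite F" using F spec_finite finite_subset by blast
  have "ip L (\<lambda>x. \<Sum>s\<in>F. fv s x) (\<lambda>x. \<Sum>s\<in>F. fv s x) = (\<Sum>s\<in>F. \<Sum>t\<in>F. ip L (fv s) (fv t))"
    by (simp add: ip_sum_left ip_sum_right)
  also have "\<dots> = (\<Sum>s\<in>F. \<Sum>t\<in>F. if t = s then ip L (fv s) (fv s) else 0)"
  proof (intro sum.cong refl)
    fix s t assume "s \<in> F" "t \<in> F"
    then show "ip L (fv s) (fv t) = (if t = s then ip L (fv s) (fv s) else 0)"
      using eig_orth[of s "fv s" t "fv t"] fv F by auto
  qed
  also have "\<dots> = (\<Sum>s\<in>F. ip L (fv s) (fv s))" using fF by simp
  finally show ?thesis .
qed

theorem chi_norm: "opnorm L (chi L I H) \<le> 1"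
proof (rule opnorm_le[OF finL])
  fix v
  obtain fv where fv: "\<forall>e\<in>spec L H. ceig (of_real e) (fv e)" "\<forall>x\<in>Pow L. v x = (\<Sum>e\<in>spec L H. fv e x)"
    using decomp[of v] unfolding ES_def by blast
  define S where "S = spec L H \<inter> I"
  have S: "S \<subseteq> spec L H" unfolding S_def by auto
  have "complex_of_real ((vnorm L (apply_op L (chi L I H) v))^2) =
      ip L (apply_op L (chi L I H) v) (apply_op L (chi L I H) v)" by (simp add: ip_self)
  also have "\<dots> = ip L (\<lambda>x. \<Sum>s\<in>S. fv s x) (\<lambda>x. \<Sum>s\<in>S. fv s x)"
    by (rule ip_cong) (simp_all add: chi_apply[OF fv] S_def)
  also have "\<dots> = (\<Sum>s\<in>S. ip L (fv s) (fv s))" by (rule ip_orth_sum[OF S fv(1)])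
  also have "\<dots> = complex_of_real (\<Sum>s\<in>S. (vnorm L (fv s))^2)" by (simp add: ip_self)
  finally have n1: "(vnorm L (apply_op L (chi L I H) v))^2 = (\<Sum>s\<in>S. (vnorm L (fv s))^2)"
    using of_real_eq_iff by blast
  have "complex_of_real ((vnorm L v)^2) = ip L (\<lambda>x. \<Sum>s\<in>spec L H. fv s x) (\<lambda>x. \<Sum>s\<in>spec L H. fv s x)"
    unfolding ip_self[symmetric] by (rule ip_cong) (simp_all add: fv(2))
  also have "\<dots> = (\<Sum>s\<in>spec L H. ip L (fv s) (fv s))" by (rule ip_orth_sum[OF subset_refl fv(1)])
  also have "\<dots> = complex_of_real (\<Sum>s\<in>spec L H. (vnorm L (fv s))^2)" by (simp add: ip_self)
  finally have n2: "(vnorm L v)^2 = (\<Sum>s\<in>spec L H. (vnorm L (fv s))^2)"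
    using of_real_eq_iff by blast
  have "(\<Sum>s\<in>S. (vnorm L (fv s))^2) \<le> (\<Sum>s\<in>spec L H. (vnorm L (fv s))^2)"
    by (rule sum_mono2[OF spec_finite S]) simp
  then have "(vnorm L (apply_op L (chi L I H) v))^2 \<le> (vnorm L v)^2" using n1 n2 by simp
  then show "vnorm L (apply_op L (chi L I H) v) \<le> 1 * vnorm L v"
    using power2_le_imp_le vnorm_nonneg by auto
qed simp

end


lemma hermD: assumes "herm L A" "x \<in> Pow L" "y \<in> Pow L" shows "A x y = cnj (A y x)"
  using bspec[OF bspec[OF assms(1)[unfolded herm_def] assms(2)] assms(3)] .

lemma herm_opadd: assumes "herm L A" "herm L B" shows "herm L (opadd A B)"
  unfolding herm_def opadd_def
proof (intro ballI)
  fix x y assume "x \<in> Pow L" "y \<in> Pow L"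
  then show "A x y + B x y = cnj (A y x + B y x)"
    using hermD[OF assms(1), of x y] hermD[OF assms(2), of x y] by simp
qed
lemma herm_opsub: assumes "herm L A" "herm L B" shows "herm L (opsub A B)"
  unfolding herm_def opsub_def
proof (intro ballI)
  fix x y assume "x \<in> Pow L" "y \<in> Pow L"
  then show "A x y - B x y = cnj (A y x - B y x)"
    using hermD[OF assms(1), of x y] hermD[OF assms(2), of x y] by simp
qed
lemma herm_opscale: assumes "herm L A" shows "herm L (opscale (complex_of_real r) A)"
  unfolding herm_def opscale_def
proof (intro ballI)
  fix x y assume "x \<in> Pow L" "y \<in> Pow L"
  then show "complex_of_real r * A x y = cnj (complex_of_real r * A y x)"
    using hermD[OF assms(1), of x y] by simp
qed
lemma herm_opsum: assumes "\<And>i. i \<in> I \<Longrightarrow> herm L (F i)" shows "herm L (opsum F I)"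
  unfolding herm_def opsum_def
proof (intro ballI)
  fix x y assume "x \<in> Pow L" "y \<in> Pow L"
  then have "(\<Sum>i\<in>I. F i x y) = (\<Sum>i\<in>I. cnj (F i y x))"
    by (intro sum.cong refl hermD[OF assms]) auto
  then show "(\<Sum>i\<in>I. F i x y) = cnj (\<Sum>i\<in>I. F i y x)" by (simp add: cnj_sum)
qed
lemma herm_occN: "herm L (occN i)"
  unfolding herm_def occN_def by auto

lemma opmul_occN: "finite L \<Longrightarrow> x \<in> Pow L \<Longrightarrow> opmul L (occN i) (occN j) x y = (if x = y \<and> i \<in> x \<and> j \<in> x then 1 else 0)"
proof -
  assume f: "finite L" and x: "x \<in> Pow L"
  have "opmul L (occN i) (occN j) x y = (\<Sum>z\<in>Pow L. if z = x then (if x = y \<and> i \<in> x \<and> j \<in> x then 1 else 0) else 0)"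
    unfolding opmul_def occN_def by (rule sum.cong) auto
  also have "\<dots> = (if x = y \<and> i \<in> x \<and> j \<in> x then 1 else 0)" using x f
    by (simp add: sum.delta)
  finally show ?thesis .
qed

lemma herm_occN2: "finite L \<Longrightarrow> herm L (opmul L (occN i) (occN j))"
  unfolding herm_def by (auto simp: opmul_occN)

lemma opmul_sigm: "finite L \<Longrightarrow> y \<in> Pow L \<Longrightarrow> j \<in> L \<Longrightarrow>
   opmul L A (sigm j) x y = (if j \<notin> y then A x (insert j y) else 0)"
proof -
  assume f: "finite L" and y: "y \<in> Pow L" and j: "j \<in> L"
  have "opmul L A (sigm j) x y = (\<Sum>z\<in>Pow L. if z = insert j y then (if j \<notin> y then A x (insert j y) else 0) else 0)"
    unfolding opmul_def sigm_def by (rule sum.cong) auto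
  also have "\<dots> = (if j \<notin> y then A x (insert j y) else 0)" using y j f by (simp add: sum.delta)
  finally show ?thesis .
qed

lemma opmul_sigp: "finite L \<Longrightarrow> y \<in> Pow L \<Longrightarrow>
   opmul L A (sigp j) x y = (if j \<in> y then A x (y - {j}) else 0)"
proof -
  assume f: "finite L" and y: "y \<in> Pow L"
  have "opmul L A (sigp j) x y = (\<Sum>z\<in>Pow L. if z = y - {j} then (if j \<in> y then A x (y - {j}) else 0) else 0)"
    unfolding opmul_def sigp_def by (rule sum.cong) auto
  also have "\<dots> = (if j \<in> y then A x (y - {j}) else 0)" using y f by (auto simp: sum.delta)
  finally show ?thesis .
qed

lemma herm_hop:
  assumes f: "finite L" and i: "i \<in> L" "i + 1 \<in> L"
  shows "herm L (opadd (opmul L (sigp i) (sigm (i+1))) (opmul L (sigm i) (sigp (i+1))))"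
  unfolding herm_def opadd_def
proof (intro ballI)
  fix x y assume x: "x \<in> Pow L" and y: "y \<in> Pow L"
  have e1: "opmul L (sigp i) (sigm (i+1)) x y =
      (if i+1 \<notin> y \<and> i \<in> y \<and> x = insert (i+1) y - {i} then 1 else 0)"
    using opmul_sigm[OF f y i(2)] by (auto simp: sigp_def)
  have e2: "opmul L (sigm i) (sigp (i+1)) x y =
      (if i+1 \<in> y \<and> i \<notin> y \<and> x = insert i (y - {i+1}) then 1 else 0)"
    using opmul_sigp[OF f y] by (auto simp: sigm_def)
  have e3: "opmul L (sigp i) (sigm (i+1)) y x =
      (if i+1 \<notin> x \<and> i \<in> x \<and> y = insert (i+1) x - {i} then 1 else 0)"
    using opmul_sigm[OF f x i(2)] by (auto simp: sigp_def)
  have e4: "opmul L (sigm i) (sigp (i+1)) y x =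
      (if i+1 \<in> x \<and> i \<notin> x \<and> y = insert i (x - {i+1}) then 1 else 0)"
    using opmul_sigp[OF f x] by (auto simp: sigm_def)
  have q1: "(i+1 \<notin> y \<and> i \<in> y \<and> x = insert (i+1) y - {i}) \<longleftrightarrow>
            (i+1 \<in> x \<and> i \<notin> x \<and> y = insert i (x - {i+1}))" by auto
  have q2: "(i+1 \<in> y \<and> i \<notin> y \<and> x = insert i (y - {i+1})) \<longleftrightarrow>
            (i+1 \<notin> x \<and> i \<in> x \<and> y = insert (i+1) x - {i})" by auto
  show "opmul L (sigp i) (sigm (i + 1)) x y + opmul L (sigm i) (sigp (i + 1)) x y =
        cnj (opmul L (sigp i) (sigm (i + 1)) y x + opmul L (sigm i) (sigp (i + 1)) y x)"
    unfolding e1 e2 e3 e4 q1 q2 by simp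
qed

lemma herm_Ham: assumes f: "finite L" shows "herm L (Ham L Del lam \<omega>)"
proof -
  have m1: "opscale (-1) A = opscale (complex_of_real (-1)) A" for A by simp
  show ?thesis
    unfolding Ham_def hterm_def m1
    by (intro herm_opadd herm_opsum herm_opsub herm_opscale herm_occN2[OF f] herm_hop[OF f] herm_occN) auto
qed


definition dg :: "(cfg \<Rightarrow> complex) \<Rightarrow> op" where "dg f = (\<lambda>x y. if x = y then f x else 0)"
definition pp :: "int set \<Rightarrow> cfg \<Rightarrow> complex" where "pp S x = (if x \<inter> S = {} then 1 else 0)"
definition qf :: "(nat \<Rightarrow> int set) \<Rightarrow> nat \<Rightarrow> cfg \<Rightarrow> complex" where
  "qf A j y = (\<Prod>i\<leftarrow>[1..<j]. 1 - pp (A i) y)"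

lemma Pplus_dg: "Pplus S = dg (pp S)"
  unfolding Pplus_def dg_def pp_def by (intro ext) auto
lemma Pminus_dg: "Pminus S = dg (\<lambda>x. 1 - pp S x)"
  unfolding Pminus_def Pplus_def dg_def pp_def opsub_def idop_def by (intro ext) auto

lemma opmul_dgr: "finite L \<Longrightarrow> y \<in> Pow L \<Longrightarrow> (\<And>z. z \<in> Pow L \<Longrightarrow> B z y = dg g z y) \<Longrightarrow>
   opmul L A B x y = A x y * g y"
proof -
  assume f: "finite L" and y: "y \<in> Pow L" and B: "\<And>z. z \<in> Pow L \<Longrightarrow> B z y = dg g z y"
  have "opmul L A B x y = (\<Sum>z\<in>Pow L. if z = y then A x y * g y else 0)"
    unfolding opmul_def by (rule sum.cong) (auto simp: B dg_def)
  also have "\<dots> = A x y * g y" using f y by (simp add: sum.delta)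
  finally show ?thesis .
qed

lemma opmul_dgl: "finite L \<Longrightarrow> x \<in> Pow L \<Longrightarrow> (\<And>z. z \<in> Pow L \<Longrightarrow> B x z = dg g x z) \<Longrightarrow>
   opmul L B A x y = g x * A x y"
proof -
  assume f: "finite L" and x: "x \<in> Pow L" and B: "\<And>z. z \<in> Pow L \<Longrightarrow> B x z = dg g x z"
  have "opmul L B A x y = (\<Sum>z\<in>Pow L. if z = x then g x * A x y else 0)"
    unfolding opmul_def by (rule sum.cong) (auto simp: B dg_def)
  also have "\<dots> = g x * A x y" using f x by (simp add: sum.delta)
  finally show ?thesis .
qed

lemma opprod_dg: "finite L \<Longrightarrow> x \<in> Pow L \<Longrightarrow>
  opprod L (map (\<lambda>i. dg (f i)) is) x y = dg (\<lambda>x. \<Prod>i\<leftarrow>is. f i x) x y"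
proof (induction "is" arbitrary: x y)
  case Nil
  then show ?case by (simp add: opprod_def idop_def dg_def)
next
  case (Cons i "is")
  have "opprod L (map (\<lambda>i. dg (f i)) (i # is)) x y = opmul L (dg (f i)) (opprod L (map (\<lambda>i. dg (f i)) is)) x y"
    by (simp add: opprod_def)
  also have "\<dots> = f i x * opprod L (map (\<lambda>i. dg (f i)) is) x y"
    by (rule opmul_dgl[OF Cons.prems]) simp
  also have "\<dots> = dg (\<lambda>x. \<Prod>i\<leftarrow>i # is. f i x) x y"
    using Cons.IH[OF Cons.prems] by (simp add: dg_def)
  finally show ?case .
qed

lemma opprod_Pminus: "finite L \<Longrightarrow> x \<in> Pow L \<Longrightarrow>
  opprod L (map (\<lambda>i. Pminus (A i)) [1..<j]) x y = dg (qf A j) x y"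
  unfolding Pminus_dg qf_def by (rule opprod_dg)

lemma supp_comm:
  assumes T: "supp_in L X T" and g: "\<And>x y. x \<in> Pow L \<Longrightarrow> y \<in> Pow L \<Longrightarrow> x - X = y - X \<Longrightarrow> g x = g y"
    and x: "x \<in> Pow L" and y: "y \<in> Pow L"
  shows "g x * T x y = T x y * (g y :: complex)"
proof -
  obtain B where B: "\<forall>x\<in>Pow L. \<forall>y\<in>Pow L. T x y = (if x - X = y - X then B (x \<inter> X) (y \<inter> X) else 0)"
    using T unfolding supp_in_def by blast
  show ?thesis
  proof (cases "x - X = y - X")
    case True then show ?thesis using g[OF x y] by simp
  next
    case False then show ?thesis using B x y by simp
  qed
qed

lemma pp_resp: "S \<inter> X = {} \<Longrightarrow> x - X = y - X \<Longrightarrow> pp S x = pp S y"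
proof -
  assume a: "S \<inter> X = {}" and b: "x - X = y - X"
  have "x \<inter> S = (x - X) \<inter> S" "y \<inter> S = (y - X) \<inter> S" using a by auto
  then show ?thesis unfolding pp_def using b by simp
qed

lemma qf_resp: "(\<And>i. i \<in> set [1..<j] \<Longrightarrow> A i \<inter> X = {}) \<Longrightarrow> x - X = y - X \<Longrightarrow> qf A j x = qf A j y"
proof -
  assume h1: "\<And>i. i \<in> set [1..<j] \<Longrightarrow> A i \<inter> X = {}" and h2: "x - X = y - X"
  have m: "map (\<lambda>i. 1 - pp (A i) x) [1..<j] = map (\<lambda>i. 1 - pp (A i) y) [1..<j]"
  proof (rule map_cong[OF refl])
    fix i assume "i \<in> set [1..<j]"
    then show "1 - pp (A i) x = 1 - pp (A i) y" using pp_resp[OF h1 h2] by simp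
  qed
  show ?thesis unfolding qf_def using arg_cong[where f=prod_list, OF m] .
qed

lemma pp_idem: "pp S y * pp S y = pp S y" by (simp add: pp_def)

lemma supp_mult:
  assumes T: "supp_in L X T" and XS: "X \<subseteq> S" and SL: "S \<subseteq> L"
    and d: "\<And>y. y \<in> Pow L \<Longrightarrow> d y = d (y \<inter> S)"
    and R: "\<And>x y. x \<in> Pow L \<Longrightarrow> y \<in> Pow L \<Longrightarrow> R x y = T x y * d y"
  shows "supp_in L S R"
proof -
  obtain B where B: "\<forall>x\<in>Pow L. \<forall>y\<in>Pow L. T x y = (if x - X = y - X then B (x \<inter> X) (y \<inter> X) else 0)"
    using T unfolding supp_in_def by blast
  define B' where "B' u w = (if u - X = w - X then B (u \<inter> X) (w \<inter> X) else 0) * d w" for u w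
  have "R x y = (if x - S = y - S then B' (x \<inter> S) (y \<inter> S) else 0)" if x: "x \<in> Pow L" and y: "y \<in> Pow L" for x y
  proof (cases "x - S = y - S")
    case True
    have e1: "(x - X = y - X) = (x \<inter> S - X = y \<inter> S - X)"
    proof
      assume "x - X = y - X"
      then show "x \<inter> S - X = y \<inter> S - X" by blast
    next
      assume h: "x \<inter> S - X = y \<inter> S - X"
      have "x - X = (x \<inter> S - X) \<union> (x - S)" "y - X = (y \<inter> S - X) \<union> (y - S)" using XS by auto
      then show "x - X = y - X" using h True by simp
    qed
    have e2: "x \<inter> S \<inter> X = x \<inter> X" "y \<inter> S \<inter> X = y \<inter> X" using XS by auto
    show ?thesis using True R[OF x y] B x y d[OF y] unfolding B'_def e1[symmetric] e2 by simp
  next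
    case False
    then have "x - X \<noteq> y - X" using XS by blast
    then show ?thesis using False R[OF x y] B x y by simp
  qed
  then show ?thesis unfolding supp_in_def using SL by blast
qed

lemma telescope:
  "(\<Sum>j\<in>{1..n}. (p j :: complex) * (\<Prod>i\<leftarrow>[1..<j]. 1 - p i)) = 1 - (\<Prod>i\<leftarrow>[1..<Suc n]. 1 - p i)"
proof (induction n)
  case 0
  then show ?case by simp
next
  case (Suc n)
  have "(\<Sum>j\<in>{1..Suc n}. p j * (\<Prod>i\<leftarrow>[1..<j]. 1 - p i)) =
        (\<Sum>j\<in>{1..n}. p j * (\<Prod>i\<leftarrow>[1..<j]. 1 - p i)) + p (Suc n) * (\<Prod>i\<leftarrow>[1..<Suc n]. 1 - p i)"
    by simp
  also have "\<dots> = 1 - (\<Prod>i\<leftarrow>[1..<Suc (Suc n)]. 1 - p i)"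
    unfolding Suc.IH by (simp add: algebra_simps)
  finally show ?case .
qed


locale opctx =
  fixes L X :: "int set" and T :: op and A :: "nat \<Rightarrow> int set"
  assumes finL: "finite L" and T: "supp_in L X T"
begin

definition TP :: "nat \<Rightarrow> op" where
  "TP j = opmul L T (opprod L (map (\<lambda>i. Pminus (A i)) [1..<j]))"
definition Tj :: "nat \<Rightarrow> op" where
  "Tj j = opmul L (opmul L T (Pplus (A j))) (opprod L (map (\<lambda>i. Pminus (A i)) [1..<j]))"

lemma TP_eq: "y \<in> Pow L \<Longrightarrow> TP j x y = T x y * qf A j y"
  unfolding TP_def by (rule opmul_dgr[OF finL], assumption, rule opprod_Pminus[OF finL])

lemma Tj_eq: "y \<in> Pow L \<Longrightarrow> Tj j x y = T x y * pp (A j) y * qf A j y"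
proof -
  assume y: "y \<in> Pow L"
  have "Tj j x y = opmul L T (Pplus (A j)) x y * qf A j y"
    unfolding Tj_def by (rule opmul_dgr[OF finL y], rule opprod_Pminus[OF finL])
  also have "opmul L T (Pplus (A j)) x y = T x y * pp (A j) y"
    by (rule opmul_dgr[OF finL y]) (simp add: Pplus_dg)
  finally show ?thesis .
qed

lemma claim1:
  assumes AX: "A j \<inter> X = {}"
  shows "opeq L (Tj j) (opmul L (opmul L (Pplus (A j)) (Tj j)) (Pplus (A j)))"
  unfolding opeq_def
proof (intro ballI)
  fix x y assume x: "x \<in> Pow L" and y: "y \<in> Pow L"
  have "opmul L (opmul L (Pplus (A j)) (Tj j)) (Pplus (A j)) x y = opmul L (Pplus (A j)) (Tj j) x y * pp (A j) y"
    by (rule opmul_dgr[OF finL y]) (simp add: Pplus_dg)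
  also have "opmul L (Pplus (A j)) (Tj j) x y = pp (A j) x * Tj j x y"
    by (rule opmul_dgl[OF finL x]) (simp add: Pplus_dg)
  moreover have c: "pp (A j) x * T x y = T x y * pp (A j) y"
    by (rule supp_comm[OF T _ x y]) (rule pp_resp[OF AX])
  ultimately have r: "opmul L (opmul L (Pplus (A j)) (Tj j)) (Pplus (A j)) x y =
      (pp (A j) x * T x y) * (pp (A j) y * pp (A j) y) * qf A j y"
    unfolding Tj_eq[OF y] by (simp add: ac_simps)
  show "Tj j x y = opmul L (opmul L (Pplus (A j)) (Tj j)) (Pplus (A j)) x y"
    unfolding r Tj_eq[OF y] c by (cases "y \<inter> A j = {}") (simp_all add: pp_def)
qed

lemma claim2:
  assumes AX: "A j \<inter> X = {}" and AU: "A j = Ain \<union> Aout"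
  shows "opeq L (Tj j) (opmul L (opmul L (Pplus Aout) (Pplus Ain)) (TP j))"
  unfolding opeq_def
proof (intro ballI)
  fix x y assume x: "x \<in> Pow L" and y: "y \<in> Pow L"
  have "opmul L (opmul L (Pplus Aout) (Pplus Ain)) (TP j) x y = (pp Aout x * pp Ain x) * TP j x y"
  proof (rule opmul_dgl[OF finL x])
    fix z assume z: "z \<in> Pow L"
    show "opmul L (Pplus Aout) (Pplus Ain) x z = dg (\<lambda>x. pp Aout x * pp Ain x) x z"
      by (subst opmul_dgl[OF finL x, of _ "pp Aout"]) (auto simp: Pplus_dg dg_def)
  qed
  also have "pp Aout x * pp Ain x = pp (A j) x" unfolding AU pp_def by auto
  finally have h1: "opmul L (opmul L (Pplus Aout) (Pplus Ain)) (TP j) x y = pp (A j) x * TP j x y" .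
  have c: "pp (A j) x * T x y = T x y * pp (A j) y"
    by (rule supp_comm[OF T _ x y]) (rule pp_resp[OF AX])
  show "Tj j x y = opmul L (opmul L (Pplus Aout) (Pplus Ain)) (TP j) x y"
    unfolding Tj_eq[OF y] h1 TP_eq[OF y] by (metis c mult.assoc)
qed

lemma telescoping:
  "opeq L (opsub T (opsum Tj {1..n})) (TP (Suc n))"
  unfolding opeq_def
proof (intro ballI)
  fix x y assume x: "x \<in> Pow L" and y: "y \<in> Pow L"
  have "opsub T (opsum Tj {1..n}) x y = T x y - (\<Sum>j\<in>{1..n}. T x y * (pp (A j) y * qf A j y))"
    unfolding opsub_def opsum_def Tj_eq[OF y] by (simp add: mult.assoc)
  also have "\<dots> = T x y * (1 - (\<Sum>j\<in>{1..n}. pp (A j) y * (\<Prod>i\<leftarrow>[1..<j]. 1 - pp (A i) y)))"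
    unfolding qf_def by (simp add: sum_distrib_left algebra_simps)
  also have "\<dots> = T x y * qf A (Suc n) y"
    unfolding telescope qf_def by simp
  finally show "opsub T (opsum Tj {1..n}) x y = TP (Suc n) x y" unfolding TP_eq[OF y] .
qed

lemma commute:
  assumes AX: "\<And>i. i \<in> set [1..<j] \<Longrightarrow> A i \<inter> X = {}"
  shows "opeq L (TP j) (opmul L (opprod L (map (\<lambda>i. Pminus (A i)) [1..<j])) T)"
  unfolding opeq_def
proof (intro ballI)
  fix x y assume x: "x \<in> Pow L" and y: "y \<in> Pow L"
  have "opmul L (opprod L (map (\<lambda>i. Pminus (A i)) [1..<j])) T x y = qf A j x * T x y"
    by (rule opmul_dgl[OF finL x], rule opprod_Pminus[OF finL x])
  also have "\<dots> = T x y * qf A j y"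
    by (rule supp_comm[OF T _ x y]) (rule qf_resp[OF AX])
  finally show "TP j x y = opmul L (opprod L (map (\<lambda>i. Pminus (A i)) [1..<j])) T x y"
    unfolding TP_eq[OF y] ..
qed

lemma supp_Tj:
  assumes XS: "X \<subseteq> S" and SL: "S \<subseteq> L" and AS: "\<And>i. i \<in> set [1..<Suc j] \<Longrightarrow> A i \<subseteq> S"
    and j1: "1 \<le> j"
  shows "supp_in L S (Tj j)"
proof (rule supp_mult[OF T XS SL])
  fix y assume y: "y \<in> Pow L"
  have "y \<inter> A i = (y \<inter> S) \<inter> A i" if "i \<in> set [1..<Suc j]" for i using AS[OF that] by auto
  moreover have "j \<in> set [1..<Suc j]" using j1 by auto
  ultimately show "pp (A j) y * qf A j y = pp (A j) (y \<inter> S) * qf A j (y \<inter> S)"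
    unfolding pp_def qf_def by (auto intro!: arg_cong[where f=prod_list])
next
  fix x y assume "x \<in> Pow L" "y \<in> Pow L"
  then show "Tj j x y = T x y * (pp (A j) y * qf A j y)" by (simp add: Tj_eq mult.assoc)
qed

lemma supp_TP:
  assumes XS: "X \<subseteq> S" and SL: "S \<subseteq> L" and AS: "\<And>i. i \<in> set [1..<j] \<Longrightarrow> A i \<subseteq> S"
  shows "supp_in L S (TP j)"
proof (rule supp_mult[OF T XS SL])
  fix y assume y: "y \<in> Pow L"
  have "y \<inter> A i = (y \<inter> S) \<inter> A i" if "i \<in> set [1..<j]" for i using AS[OF that] by auto
  then show "qf A j y = qf A j (y \<inter> S)"
    unfolding pp_def qf_def by (auto intro!: arg_cong[where f=prod_list])
next
  fix x y assume "x \<in> Pow L" "y \<in> Pow L"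
  then show "TP j x y = T x y * qf A j y" by (simp add: TP_eq)
qed

lemma norm_bound:
  assumes X0: "opeq L X0 (opmul L Q T)" and nT: "opnorm L T \<le> 1" and nY: "opnorm L Y \<le> 1"
  shows "opnorm L (conjop L X0 Y) \<le> opnorm L (opmul L Y Q)"
proof -
  have "opeq L (conjop L X0 Y) (opmul L (opmul L Y (opmul L Q T)) (adj Y))"
    unfolding conjop_def by (intro opmul_cong X0 opeq_refl)
  then have "opeq L (conjop L X0 Y) (opmul L (opmul L (opmul L Y Q) T) (adj Y))"
    by (simp add: opmul_assoc)
  then have "opnorm L (conjop L X0 Y) = opnorm L (opmul L (opmul L (opmul L Y Q) T) (adj Y))"
    by (rule opnorm_opeq)
  also have "\<dots> \<le> opnorm L (opmul L (opmul L Y Q) T) * opnorm L (adj Y)" by (rule opnorm_mul[OF finL])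
  also have "\<dots> \<le> (opnorm L (opmul L Y Q) * opnorm L T) * 1"
    using opnorm_mul[OF finL, of "opmul L Y Q" T] opnorm_adj[OF finL, of Y] nY
      opnorm_nonneg[OF finL] by (meson dual_order.trans mult_mono)
  also have "\<dots> \<le> opnorm L (opmul L Y Q)"
    using nT opnorm_nonneg[OF finL, of "opmul L Y Q"] by (simp add: mult_left_le)
  finally show ?thesis .
qed

end


lemma nbhd_int:
  assumes "lo \<le> hi"
  shows "nbhd L {lo..hi} t = {x\<in>L. lo - int t \<le> x \<and> x \<le> hi + int t}"
proof (intro set_eqI iffI)
  fix x assume "x \<in> nbhd L {lo..hi} t"
  then show "x \<in> {x\<in>L. lo - int t \<le> x \<and> x \<le> hi + int t}" unfolding nbhd_def by auto
next
  fix x assume x: "x \<in> {x\<in>L. lo - int t \<le> x \<and> x \<le> hi + int t}"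
  define y where "y = max lo (min hi x)"
  have "y \<in> {lo..hi}" "\<bar>x - y\<bar> \<le> int t" using x assms unfolding y_def by auto
  then show "x \<in> nbhd L {lo..hi} t" using x unfolding nbhd_def by blast
qed

lemma nbhd_D: "x \<in> nbhd L {c..d} t \<Longrightarrow> c - int t \<le> x \<and> x \<le> d + int t \<and> x \<in> L"
  unfolding nbhd_def by auto

lemma nbhd_I: "x \<in> L \<Longrightarrow> c \<le> d \<Longrightarrow> c - int t \<le> x \<Longrightarrow> x \<le> d + int t \<Longrightarrow> x \<in> nbhd L {c..d} t"
  using nbhd_int[of c d L t] by auto

lemma bd_in_int:
  assumes L: "L = {a..b}" and lo: "a \<le> lo - 1" and hi: "hi + 1 \<le> b"
  shows "bd_in L t {lo..hi} = {x. lo \<le> x \<and> x \<le> hi \<and> (x \<le> lo - 1 + int t \<or> hi + 1 - int t \<le> x)}"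
proof (intro set_eqI iffI)
  fix x assume "x \<in> bd_in L t {lo..hi}"
  then obtain y where "lo \<le> x" "x \<le> hi" "y \<in> L" "y \<notin> {lo..hi}" "\<bar>x - y\<bar> \<le> int t"
    unfolding bd_in_def by auto
  then show "x \<in> {x. lo \<le> x \<and> x \<le> hi \<and> (x \<le> lo - 1 + int t \<or> hi + 1 - int t \<le> x)}" by auto
next
  fix x assume x: "x \<in> {x. lo \<le> x \<and> x \<le> hi \<and> (x \<le> lo - 1 + int t \<or> hi + 1 - int t \<le> x)}"
  show "x \<in> bd_in L t {lo..hi}"
  proof (cases "x \<le> lo - 1 + int t")
    case True
    then have "lo - 1 \<in> L - {lo..hi}" "\<bar>x - (lo - 1)\<bar> \<le> int t" using x L lo hi by auto
    moreover have "x \<in> {lo..hi}" using x by auto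
    ultimately show ?thesis unfolding bd_in_def mem_Collect_eq by blast
  next
    case False
    then have "hi + 1 \<in> L - {lo..hi}" "\<bar>x - (hi + 1)\<bar> \<le> int t" using x L lo hi by auto
    moreover have "x \<in> {lo..hi}" using x by auto
    ultimately show ?thesis unfolding bd_in_def mem_Collect_eq by blast
  qed
qed

lemma Upsilon_two:
  assumes ab: "\<alpha> \<le> \<beta>" and gap: "\<beta> + 1 < \<gamma>" and gd: "\<gamma> \<le> \<delta>"
  shows "Upsilon ({\<alpha>..\<beta>} \<union> {\<gamma>..\<delta>}) \<le> 2"
proof -
  define S where "S = {\<alpha>..\<beta>} \<union> {\<gamma>..\<delta>}"
  define U where "U = {I. fin_interval I \<and> I \<subseteq> S \<and> (\<forall>J. fin_interval J \<and> I \<subseteq> J \<and> J \<subseteq> S \<longrightarrow> J = I)}"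
  have "U \<subseteq> {{\<alpha>..\<beta>}, {\<gamma>..\<delta>}}"
  proof
    fix I assume "I \<in> U"
    then have fi: "fin_interval I" and IS: "I \<subseteq> S"
      and mx: "\<And>J. fin_interval J \<Longrightarrow> I \<subseteq> J \<Longrightarrow> J \<subseteq> S \<Longrightarrow> J = I"
      unfolding U_def by blast+
    obtain p q where pq: "p \<le> q" "I = {p..q}" using fi unfolding fin_interval_def by blast
    have pS: "p \<in> S" using IS pq by auto
    show "I \<in> {{\<alpha>..\<beta>}, {\<gamma>..\<delta>}}"
    proof (cases "p \<le> \<beta>")
      case True
      have "q \<le> \<beta>"
      proof (rule ccontr)
        assume "\<not> q \<le> \<beta>"
        then have "\<beta> + 1 \<in> I" using pq True by auto
        then show False using IS gap unfolding S_def by auto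
      qed
      then have "I \<subseteq> {\<alpha>..\<beta>}" using pq pS True gap unfolding S_def by auto
      moreover have "fin_interval {\<alpha>..\<beta>}" using ab unfolding fin_interval_def by blast
      ultimately have "{\<alpha>..\<beta>} = I" using mx unfolding S_def by blast
      then show ?thesis by simp
    next
      case False
      then have "\<gamma> \<le> p" using pS unfolding S_def by auto
      moreover have "q \<in> S" using IS pq by auto
      ultimately have "q \<le> \<delta>" using pq gap unfolding S_def by auto
      then have "I \<subseteq> {\<gamma>..\<delta>}" using pq \<open>\<gamma> \<le> p\<close> by auto
      moreover have "fin_interval {\<gamma>..\<delta>}" using gd unfolding fin_interval_def by blast
      ultimately have "{\<gamma>..\<delta>} = I" using mx unfolding S_def by blast
      then show ?thesis by simp
    qed
  qed
  then have "card U \<le> card {{\<alpha>..\<beta>}, {\<gamma>..\<delta>}}" by (intro card_mono) auto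
  also have "\<dots> \<le> 2" by (simp add: card_insert_if)
  finally show ?thesis unfolding Upsilon_def U_def S_def .
qed


lemma setdist_far:
  assumes L: "L = {a..b}" and X: "X = {c..d}" and cd: "c \<le> d" and XL: "X \<subseteq> L"
    and sd: "setdist X (- L) > r"
  shows "r < real_of_int (c - a + 1) \<and> r < real_of_int (b + 1 - d)"
proof -
  let ?S = "{real_of_int \<bar>x - y\<bar> | x y. x \<in> X \<and> y \<in> - L}"
  have bdd: "bdd_below ?S" by (rule bdd_belowI[of _ 0]) auto
  have ca: "c \<ge> a" "d \<le> b" using XL cd unfolding L X by auto
  have "real_of_int \<bar>c - (a - 1)\<bar> \<in> ?S"
    by (rule CollectI, rule exI[of _ c], rule exI[of _ "a - 1"]) (use cd in \<open>auto simp: L X\<close>)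
  then have "setdist X (- L) \<le> real_of_int \<bar>c - (a - 1)\<bar>" unfolding setdist_def by (rule cInf_lower[OF _ bdd])
  moreover have "real_of_int \<bar>d - (b + 1)\<bar> \<in> ?S"
    by (rule CollectI, rule exI[of _ d], rule exI[of _ "b + 1"]) (use cd in \<open>auto simp: L X\<close>)
  then have "setdist X (- L) \<le> real_of_int \<bar>d - (b + 1)\<bar>" unfolding setdist_def by (rule cInf_lower[OF _ bdd])
  ultimately show ?thesis using sd ca by auto
qed

locale geo =
  fixes L X :: "int set" and a b c d :: int and l k :: nat
  assumes L: "L = {a..b}" and X: "X = {c..d}" and cd: "c \<le> d" and l1: "l \<ge> 1"
    and farL: "c - a \<ge> int (9 * (k+1) * l) + 1" and farR: "b - d \<ge> int (9 * (k+1) * l) + 1"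
begin

definition A :: "nat \<Rightarrow> int set" where "A i = bd L (3*l) (nbhd L X (9*i*l))"
definition sv :: "nat \<Rightarrow> int" where "sv i = int (9*i*l)"
definition big :: int where "big = int (9 * (k+1) * l)"

lemma fL: "c - a \<ge> big + 1" "b - d \<ge> big + 1" using farL farR unfolding big_def by auto
lemma l3: "int (3*l) = 3 * int l" "int l \<ge> 1" using l1 by auto

lemma s_bounds:
  assumes i: "1 \<le> i" "i \<le> k+1"
  shows "9 * int l \<le> sv i" "sv i \<le> big"
proof -
  have "9*l \<le> 9*i*l" "9*i*l \<le> 9*(k+1)*l" using i by (simp_all add: mult_le_mono1 mult_le_mono2)
  then show "9 * int l \<le> sv i" "sv i \<le> big" unfolding sv_def big_def by linarith+
qed

lemma s_gap: "i < j \<Longrightarrow> sv i + 9 * int l \<le> sv j"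
proof -
  assume "i < j"
  then have "9*(i+1)*l \<le> 9*j*l" by (intro mult_le_mono1) auto
  moreover have "9*(i+1)*l = 9*i*l + 9*l" by (simp add: add_mult_distrib2 add_mult_distrib)
  ultimately have "int (9*i*l) + int (9*l) \<le> int (9*j*l)" by (simp only: of_nat_add[symmetric] of_nat_le_iff)
  then show ?thesis unfolding sv_def by simp
qed

lemma s_small: "1 \<le> j \<Longrightarrow> int ((9*j-6)*l) = sv j - 6 * int l"
proof -
  assume j: "1 \<le> j"
  have "(9*j-6)*l + 6*l = 9*j*l" using j by (simp add: diff_mult_distrib)
  then have "int ((9*j-6)*l) + int (6*l) = int (9*j*l)" by (simp only: of_nat_add[symmetric] of_nat_eq_iff)
  then show ?thesis unfolding sv_def by simp
qed

lemma s_large: "int ((9*j+3)*l) = sv j + 3 * int l"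
proof -
  have "(9*j+3)*l = 9*j*l + 3*l" by (simp add: add_mult_distrib)
  then have "int ((9*j+3)*l) = int (9*j*l) + int (3*l)" by (simp only: of_nat_add[symmetric])
  then show ?thesis unfolding sv_def by simp
qed

lemma M_eq:
  assumes i: "1 \<le> i" "i \<le> k+1"
  shows "nbhd L X (9*i*l) = {c - sv i .. d + sv i}"
proof -
  have e: "nbhd L X (9*i*l) = {x\<in>L. c - sv i \<le> x \<and> x \<le> d + sv i}"
    unfolding X nbhd_int[OF cd] sv_def ..
  have h: "9 * int l \<le> sv i" "sv i \<le> big" using s_bounds[OF i] .
  show ?thesis unfolding e
  proof (intro set_eqI)
    fix x show "x \<in> {x \<in> L. c - sv i \<le> x \<and> x \<le> d + sv i} \<longleftrightarrow> x \<in> {c - sv i..d + sv i}"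
      unfolding L mem_Collect_eq atLeastAtMost_iff using h fL l3(2) by linarith
  qed
qed

lemma Aout_eq:
  assumes i: "1 \<le> i" "i \<le> k+1"
  shows "bd_out L (3*l) (nbhd L X (9*i*l)) =
    {x. a \<le> x \<and> x \<le> b \<and> ((c - sv i - 3 * int l \<le> x \<and> x < c - sv i) \<or>
                     (d + sv i < x \<and> x \<le> d + sv i + 3 * int l))}"
proof -
  have le: "c - sv i \<le> d + sv i" using s_bounds[OF i] l3 cd by linarith
  show ?thesis
    unfolding bd_out_def M_eq[OF i] nbhd_int[OF le] using le l3 by (auto simp: L)
qed

lemma Ain_eq:
  assumes i: "1 \<le> i" "i \<le> k+1"
  shows "bd_in L (3*l) (nbhd L X (9*i*l)) =
    {x. c - sv i \<le> x \<and> x \<le> d + sv i \<and>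
        (x \<le> c - sv i - 1 + 3 * int l \<or> d + sv i + 1 - 3 * int l \<le> x)}"
proof -
  have h: "a \<le> c - sv i - 1" "d + sv i + 1 \<le> b" using s_bounds[OF i] fL by linarith+
  show ?thesis unfolding M_eq[OF i] bd_in_int[OF L h] l3 ..
qed

lemma A_mem:
  assumes i: "1 \<le> i" "i \<le> k+1"
  shows "x \<in> A i \<longleftrightarrow> a \<le> x \<and> x \<le> b \<and>
     ((c - sv i - 3 * int l \<le> x \<and> x \<le> c - sv i + 3 * int l - 1) \<or>
      (d + sv i - 3 * int l + 1 \<le> x \<and> x \<le> d + sv i + 3 * int l))"
proof -
  have h: "9 * int l \<le> sv i" "sv i \<le> big" using s_bounds[OF i] .
  show ?thesis
    unfolding A_def bd_def Un_iff Aout_eq[OF i] Ain_eq[OF i] mem_Collect_eq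
    using h fL cd l3(2) by linarith
qed

lemma A_eq:
  assumes i: "1 \<le> i" "i \<le> k+1"
  shows "A i = {max a (c - sv i - 3 * int l) .. c - sv i + 3 * int l - 1} \<union>
               {d + sv i - 3 * int l + 1 .. min b (d + sv i + 3 * int l)}"
proof -
  have h: "9 * int l \<le> sv i" "sv i \<le> big" using s_bounds[OF i] .
  show ?thesis
  proof (intro set_eqI)
    fix x show "x \<in> A i \<longleftrightarrow> x \<in> {max a (c - sv i - 3 * int l) .. c - sv i + 3 * int l - 1} \<union>
               {d + sv i - 3 * int l + 1 .. min b (d + sv i + 3 * int l)}"
      unfolding A_mem[OF i] Un_iff atLeastAtMost_iff max_def min_def using h fL cd l3(2) by auto
  qed
qed

lemma A_Upsilon:
  assumes i: "1 \<le> i" "i \<le> k+1"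
  shows "Upsilon (A i) \<le> 2"
proof -
  have h: "9 * int l \<le> sv i" "sv i \<le> big" using s_bounds[OF i] .
  show ?thesis unfolding A_eq[OF i] 
    by (rule Upsilon_two) (use h fL cd l3(2) in \<open>simp_all add: max_def min_def\<close>)
qed

lemma A_ne: assumes i: "1 \<le> i" "i \<le> k+1" shows "A i \<noteq> {}" "A i \<subseteq> L"
proof -
  have h: "9 * int l \<le> sv i" "sv i \<le> big" using s_bounds[OF i] .
  have "c - sv i - 1 \<in> A i" unfolding A_mem[OF i] using h fL cd l3(2) by linarith
  then show "A i \<noteq> {}" by auto
  show "A i \<subseteq> L" using A_mem[OF i] L by auto
qed

lemma A_X: assumes i: "1 \<le> i" "i \<le> k+1" shows "A i \<inter> X = {}"
proof -
  have h: "9 * int l \<le> sv i" "sv i \<le> big" using s_bounds[OF i] .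
  have "x \<notin> A i" if "x \<in> X" for x
    unfolding A_mem[OF i] using that h l3(2) unfolding X atLeastAtMost_iff by linarith
  then show ?thesis by auto
qed

lemma A_dist:
  assumes i: "1 \<le> i" "i \<le> k+1" and j: "1 \<le> j" "j \<le> k+1" and ij: "i < j"
    and x: "x \<in> A i" and y: "y \<in> A j"
  shows "\<bar>x - y\<bar> \<ge> 2 * int l + 1"
  using x y s_gap[OF ij] s_bounds[OF i] s_bounds[OF j] cd l3(2)
  unfolding A_mem[OF i] A_mem[OF j] by linarith

lemma A_dist2:
  assumes i: "i \<in> {1..k+1}" and j: "j \<in> {1..k+1}" and ij: "i \<noteq> j"
    and x: "x \<in> A i" and y: "y \<in> A j"
  shows "\<bar>x - y\<bar> \<ge> 2 * int l + 1"
proof (cases "i < j")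
  case True then show ?thesis using A_dist i j x y by auto
next
  case False then have "j < i" using ij by auto
  then show ?thesis using A_dist[of j i y x] i j x y by auto
qed

lemma Aout_far: assumes j: "1 \<le> j" "j \<le> k+1"
  shows "bd_out L (3*l) (nbhd L X (9*j*l)) \<inter> nbhd L X ((9*j-6)*l) = {}"
proof -
  have "x \<notin> nbhd L X ((9*j-6)*l)" if "x \<in> bd_out L (3*l) (nbhd L X (9*j*l))" for x
  proof
    assume "x \<in> nbhd L X ((9*j-6)*l)"
    from nbhd_D[OF this[unfolded X]] show False
      using that unfolding Aout_eq[OF j] s_small[OF j(1)] using l3(2) by auto
  qed
  then show ?thesis by auto
qed

lemma Ain_far: assumes j: "1 \<le> j" "j \<le> k+1"
  shows "bd_in L (3*l) (nbhd L X (9*j*l)) \<inter> nbhd L X ((9*j-6)*l) = {}"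
proof -
  have "x \<notin> nbhd L X ((9*j-6)*l)" if "x \<in> bd_in L (3*l) (nbhd L X (9*j*l))" for x
  proof
    assume "x \<in> nbhd L X ((9*j-6)*l)"
    from nbhd_D[OF this[unfolded X]] show False
      using that unfolding Ain_eq[OF j] s_small[OF j(1)] using l3(2) cd by auto
  qed
  then show ?thesis by auto
qed

lemma Aout_Ain: "bd_out L s M \<inter> bd_in L s M = {}"
  unfolding bd_out_def bd_in_def by auto

lemma X_nbhd: "X \<subseteq> nbhd L X t" "nbhd L X t \<subseteq> L"
proof -
  have "0 \<le> big" unfolding big_def by simp
  then have "X \<subseteq> L" using fL cd unfolding X L by auto
  then show "X \<subseteq> nbhd L X t" unfolding nbhd_def by force
  show "nbhd L X t \<subseteq> L" unfolding nbhd_def by auto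
qed

lemma A_in_big: assumes i: "1 \<le> i" "i \<le> j" "j \<le> k+1"
  shows "A i \<subseteq> nbhd L X ((9*j+3)*l)"
proof
  fix x assume x: "x \<in> A i"
  have i2: "i \<le> k+1" using i by auto
  have ij: "sv i \<le> sv j" using s_gap[of i j] i l3(2) by (cases "i = j") auto
  have h: "9 * int l \<le> sv i" "sv i \<le> big" using s_bounds[OF i(1) i2] .
  have m: "a \<le> x \<and> x \<le> b \<and>
     ((c - sv i - 3 * int l \<le> x \<and> x \<le> c - sv i + 3 * int l - 1) \<or>
      (d + sv i - 3 * int l + 1 \<le> x \<and> x \<le> d + sv i + 3 * int l))"
    using x A_mem[OF i(1) i2] by blast
  show "x \<in> nbhd L X ((9*j+3)*l)" unfolding X
  proof (rule nbhd_I)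
    show "x \<in> L" using m L by auto
    show "c \<le> d" by (rule cd)
    show "c - int ((9*j+3)*l) \<le> x" unfolding s_large using m ij h cd by linarith
    show "x \<le> d + int ((9*j+3)*l)" unfolding s_large using m ij h cd by linarith
  qed
qed

lemma A_in_small: assumes i: "1 \<le> i" "i < j" "j \<le> k+1"
  shows "A i \<subseteq> nbhd L X ((9*j-6)*l)"
proof
  fix x assume x: "x \<in> A i"
  have i2: "i \<le> k+1" using i by auto
  have ij: "sv i + 9 * int l \<le> sv j" using s_gap[OF i(2)] .
  have h: "9 * int l \<le> sv i" "sv i \<le> big" using s_bounds[OF i(1) i2] .
  have j1: "1 \<le> j" using i by auto
  have m: "a \<le> x \<and> x \<le> b \<and>
     ((c - sv i - 3 * int l \<le> x \<and> x \<le> c - sv i + 3 * int l - 1) \<or>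
      (d + sv i - 3 * int l + 1 \<le> x \<and> x \<le> d + sv i + 3 * int l))"
    using x A_mem[OF i(1) i2] by blast
  show "x \<in> nbhd L X ((9*j-6)*l)" unfolding X
  proof (rule nbhd_I)
    show "x \<in> L" using m L by auto
    show "c \<le> d" by (rule cd)
    show "c - int ((9*j-6)*l) \<le> x" unfolding s_small[OF j1] using m ij h cd by linarith
    show "x \<le> d + int ((9*j-6)*l)" unfolding s_small[OF j1] using m ij h cd by linarith
  qed
qed

end


theorem lemma3p3:
  fixes \<mu> :: "real measure" and Del0 lam0 m0 :: real and C :: "nat \<Rightarrow> real"
  assumes law: "admissible_law \<mu>"
    and Del0: "Del0 > 9" and lam0: "lam0 > 0" and m0: "m0 > 0"
    and prev: "\<And>k Del lam L l S. k \<ge> 1 \<Longrightarrow> Del \<ge> Del0 \<Longrightarrow> lam \<ge> lam0 \<Longrightarrow>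
        fin_interval L \<Longrightarrow> l \<ge> 1 \<Longrightarrow>
        (\<forall>i\<in>{1..k+1}. S i \<noteq> {} \<and> S i \<subseteq> L) \<Longrightarrow>
        (\<forall>i\<in>{1..k+1}. \<forall>j\<in>{1..k+1}. i \<noteq> j \<longrightarrow>
            (\<forall>x\<in>S i. \<forall>y\<in>S j. \<bar>x - y\<bar> \<ge> 2 * int l + 1)) \<Longrightarrow>
        Expect \<mu> L (\<lambda>\<omega>. opnorm L (opmul L (chi L (Ile k Del) (Ham L Del lam \<omega>))
                                   (opprod L (map (\<lambda>i. Pminus (S i)) [1..<k+2]))))
          \<le> ennreal (C k * real (Max ((\<lambda>i. Upsilon (S i)) ` {1..k+1}))
                     * real (card L) ^ (2*k+1) * exp (- m0 * real l))"
  shows "\<exists>C' :: nat \<Rightarrow> real. \<forall>k l Del lam L X T.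
     k \<ge> 1 \<longrightarrow> l \<ge> 1 \<longrightarrow> Del \<ge> Del0 \<longrightarrow> lam \<ge> lam0 \<longrightarrow>
     fin_interval L \<longrightarrow> fin_interval X \<longrightarrow> X \<subseteq> L \<longrightarrow>
     supp_in L X T \<longrightarrow> opnorm L T \<le> 1 \<longrightarrow>
     setdist X (- L) > real (9 * (k+1) * l + 1) \<longrightarrow>
     (let A = (\<lambda>i. bd L (3*l) (nbhd L X (9*i*l)));
          Aout = (\<lambda>i. bd_out L (3*l) (nbhd L X (9*i*l)));
          Ain = (\<lambda>i. bd_in L (3*l) (nbhd L X (9*i*l)));
          TP = (\<lambda>j. opmul L T (opprod L (map (\<lambda>i. Pminus (A i)) [1..<j])));
          Tj = (\<lambda>j. opmul L (opmul L T (Pplus (A j))) (opprod L (map (\<lambda>i. Pminus (A i)) [1..<j])))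
      in (\<forall>j\<in>{1..k+1}.
            opeq L (Tj j) (opmul L (opmul L (Pplus (A j)) (Tj j)) (Pplus (A j))) \<and>
            opeq L (Tj j) (opmul L (opmul L (Pplus (Aout j)) (Pplus (Ain j))) (TP j)) \<and>
            Aout j \<inter> Ain j = {} \<and> Aout j \<inter> nbhd L X ((9*j-6)*l) = {} \<and>
            Ain j \<inter> nbhd L X ((9*j-6)*l) = {} \<and>
            supp_in L (nbhd L X ((9*j+3)*l)) (Tj j) \<and>
            supp_in L (nbhd L X ((9*j-6)*l)) (TP j))
         \<and> Expect \<mu> L (\<lambda>\<omega>. opnorm L (conjop L (opsub T (opsum Tj {1..k+1}))
                                          (chi L (Ile k Del) (Ham L Del lam \<omega>))))
             \<le> ennreal (C' k * real (card L) ^ (2*k+1) * exp (- m0 * real l)))"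
  proof -
  define C' where "C' k = 2 * \<bar>C k\<bar>" for k
  show ?thesis
  proof (intro exI[of _ C'] allI impI)
    fix k l :: nat and Del lam :: real and L X :: "int set" and T :: op
    assume k1: "k \<ge> 1" and l1: "l \<ge> 1" and Del: "Del \<ge> Del0" and lam: "lam \<ge> lam0"
      and fiL: "fin_interval L" and fiX: "fin_interval X" and XL: "X \<subseteq> L"
      and sT: "supp_in L X T" and nT: "opnorm L T \<le> 1"
      and sd: "setdist X (- L) > real (9 * (k+1) * l + 1)"
    obtain a b where ab: "a \<le> b" "L = {a..b}" using fiL unfolding fin_interval_def by blast
    obtain c d where cd: "c \<le> d" "X = {c..d}" using fiX unfolding fin_interval_def by blast
    have finL: "finite L" using ab by simp
    have far: "real (9 * (k+1) * l + 1) < real_of_int (c - a + 1) \<and> real (9 * (k+1) * l + 1) < real_of_int (b + 1 - d)"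
      by (rule setdist_far[OF ab(2) cd(2) cd(1) XL sd])
    have r1: "real (9 * (k+1) * l + 1) = real_of_int (int (9 * (k+1) * l) + 1)" by simp
    have farL: "int (9 * (k+1) * l) + 1 < c - a + 1" using far unfolding r1 of_int_less_iff by blast
    have farR: "int (9 * (k+1) * l) + 1 < b + 1 - d" using far unfolding r1 of_int_less_iff by blast
    interpret g: geo L X a b c d l k
      by unfold_locales (use ab cd l1 farL farR in auto)
    interpret o: opctx L X T g.A
      by unfold_locales (rule finL, rule sT)
    have Afun: "g.A = (\<lambda>i. bd L (3*l) (nbhd L X (9*i*l)))" by (rule ext) (simp add: g.A_def)
    have Tjfun: "o.Tj = (\<lambda>j. opmul L (opmul L T (Pplus (g.A j))) (opprod L (map (\<lambda>i. Pminus (g.A i)) [1..<j])))"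
      by (rule ext) (simp add: o.Tj_def)
    have TPfun: "o.TP = (\<lambda>j. opmul L T (opprod L (map (\<lambda>i. Pminus (g.A i)) [1..<j])))"
      by (rule ext) (simp add: o.TP_def)
    have part1: "\<forall>j\<in>{1..k+1}.
            opeq L (o.Tj j) (opmul L (opmul L (Pplus (g.A j)) (o.Tj j)) (Pplus (g.A j))) \<and>
            opeq L (o.Tj j) (opmul L (opmul L (Pplus (bd_out L (3*l) (nbhd L X (9*j*l))))
                  (Pplus (bd_in L (3*l) (nbhd L X (9*j*l))))) (o.TP j)) \<and>
            bd_out L (3*l) (nbhd L X (9*j*l)) \<inter> bd_in L (3*l) (nbhd L X (9*j*l)) = {} \<and>
            bd_out L (3*l) (nbhd L X (9*j*l)) \<inter> nbhd L X ((9*j-6)*l) = {} \<and>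
            bd_in L (3*l) (nbhd L X (9*j*l)) \<inter> nbhd L X ((9*j-6)*l) = {} \<and>
            supp_in L (nbhd L X ((9*j+3)*l)) (o.Tj j) \<and>
            supp_in L (nbhd L X ((9*j-6)*l)) (o.TP j)"
    proof (intro ballI conjI)
      fix j assume j: "j \<in> {1..k+1}"
      then have j1: "1 \<le> j" and j2: "j \<le> k+1" by auto
      show "opeq L (o.Tj j) (opmul L (opmul L (Pplus (g.A j)) (o.Tj j)) (Pplus (g.A j)))"
        by (rule o.claim1[OF g.A_X[OF j1 j2]])
      show "opeq L (o.Tj j) (opmul L (opmul L (Pplus (bd_out L (3*l) (nbhd L X (9*j*l))))
                  (Pplus (bd_in L (3*l) (nbhd L X (9*j*l))))) (o.TP j))"
        by (rule o.claim2[OF g.A_X[OF j1 j2]]) (simp add: g.A_def bd_def)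
      show "bd_out L (3*l) (nbhd L X (9*j*l)) \<inter> bd_in L (3*l) (nbhd L X (9*j*l)) = {}"
        by (rule g.Aout_Ain)
      show "bd_out L (3*l) (nbhd L X (9*j*l)) \<inter> nbhd L X ((9*j-6)*l) = {}"
        by (rule g.Aout_far[OF j1 j2])
      show "bd_in L (3*l) (nbhd L X (9*j*l)) \<inter> nbhd L X ((9*j-6)*l) = {}"
        by (rule g.Ain_far[OF j1 j2])
      show "supp_in L (nbhd L X ((9*j+3)*l)) (o.Tj j)"
      proof (rule o.supp_Tj[OF g.X_nbhd(1) g.X_nbhd(2) _ j1])
        fix i assume "i \<in> set [1..<Suc j]"
        then have "1 \<le> i" "i \<le> j" by auto
        then show "g.A i \<subseteq> nbhd L X ((9*j+3)*l)" using g.A_in_big j2 by blast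
      qed
      show "supp_in L (nbhd L X ((9*j-6)*l)) (o.TP j)"
      proof (rule o.supp_TP[OF g.X_nbhd(1) g.X_nbhd(2)])
        fix i assume "i \<in> set [1..<j]"
        then have "1 \<le> i" "i < j" by auto
        then show "g.A i \<subseteq> nbhd L X ((9*j-6)*l)" using g.A_in_small j2 by blast
      qed
    qed
    define Q where "Q = opprod L (map (\<lambda>i. Pminus (g.A i)) [1..<k+2])"
    have pw: "opnorm L (conjop L (opsub T (opsum o.Tj {1..k+1})) (chi L (Ile k Del) (Ham L Del lam \<omega>)))
       \<le> opnorm L (opmul L (chi L (Ile k Del) (Ham L Del lam \<omega>)) Q)" for \<omega>
    proof (rule o.norm_bound[OF _ nT])
      have e: "k + 2 = Suc (k + 1)" by simp
      have "opeq L (opsub T (opsum o.Tj {1..k+1})) (o.TP (k+2))"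
        unfolding e by (rule o.telescoping)
      moreover have "opeq L (o.TP (k+2)) (opmul L Q T)" unfolding Q_def
      proof (rule o.commute)
        fix i assume "i \<in> set [1..<k+2]"
        then have "1 \<le> i" "i \<le> k+1" by auto
        then show "g.A i \<inter> X = {}" by (rule g.A_X)
      qed
      ultimately show "opeq L (opsub T (opsum o.Tj {1..k+1})) (opmul L Q T)" by (rule opeq_trans)
      interpret h: hs L "Ham L Del lam \<omega>" by unfold_locales (rule finL, rule herm_Ham[OF finL])
      show "opnorm L (chi L (Ile k Del) (Ham L Del lam \<omega>)) \<le> 1" by (rule h.chi_norm)
    qed
    define M where "M = real (Max ((\<lambda>i. Upsilon (g.A i)) ` {1..k+1}))"
    define P where "P = real (card L) ^ (2*k+1) * exp (- m0 * real l)"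
    have M2: "M \<le> 2"
    proof -
      have "Max ((\<lambda>i. Upsilon (g.A i)) ` {1..k+1}) \<le> 2"
        using g.A_Upsilon by (subst Max_le_iff) auto
      then show ?thesis unfolding M_def by simp
    qed
    have M0: "M \<ge> 0" unfolding M_def by simp
    have P0: "P \<ge> 0" unfolding P_def by simp
    have prev': "Expect \<mu> L (\<lambda>\<omega>. opnorm L (opmul L (chi L (Ile k Del) (Ham L Del lam \<omega>)) Q))
          \<le> ennreal (C k * M * P)"
      unfolding Q_def M_def P_def mult.assoc[of "C k * _"]
      using prev[of k Del lam L l g.A, OF k1 Del lam fiL l1] g.A_ne g.A_dist2
      by (simp add: mult.assoc)
    have "C k * M \<le> \<bar>C k\<bar> * 2"
    proof -
      have "C k * M \<le> \<bar>C k\<bar> * M" using M0 by (intro mult_right_mono) auto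
      also have "\<dots> \<le> \<bar>C k\<bar> * 2" using M2 by (intro mult_left_mono) auto
      finally show ?thesis .
    qed
    then have CM: "C k * M * P \<le> C' k * P" unfolding C'_def using P0
      by (intro mult_right_mono) (auto simp: mult.commute)
    have "Expect \<mu> L (\<lambda>\<omega>. opnorm L (conjop L (opsub T (opsum o.Tj {1..k+1})) (chi L (Ile k Del) (Ham L Del lam \<omega>))))
        \<le> Expect \<mu> L (\<lambda>\<omega>. opnorm L (opmul L (chi L (Ile k Del) (Ham L Del lam \<omega>)) Q))"
      unfolding Expect_def by (intro nn_integral_mono ennreal_leI pw)
    also have "\<dots> \<le> ennreal (C k * M * P)" by (rule prev')
    also have "\<dots> \<le> ennreal (C' k * P)" by (rule ennreal_leI[OF CM])
    finally have part2: "Expect \<mu> L (\<lambda>\<omega>. opnorm L (conjop L (opsub T (opsum o.Tj {1..k+1})) (chi L (Ile k Del) (Ham L Del lam \<omega>))))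
        \<le> ennreal (C' k * real (card L) ^ (2*k+1) * exp (- m0 * real l))"
      unfolding P_def by (simp add: mult.assoc)
    show "let A = (\<lambda>i. bd L (3*l) (nbhd L X (9*i*l)));
          Aout = (\<lambda>i. bd_out L (3*l) (nbhd L X (9*i*l)));
          Ain = (\<lambda>i. bd_in L (3*l) (nbhd L X (9*i*l)));
          TP = (\<lambda>j. opmul L T (opprod L (map (\<lambda>i. Pminus (A i)) [1..<j])));
          Tj = (\<lambda>j. opmul L (opmul L T (Pplus (A j))) (opprod L (map (\<lambda>i. Pminus (A i)) [1..<j])))
      in (\<forall>j\<in>{1..k+1}.
            opeq L (Tj j) (opmul L (opmul L (Pplus (A j)) (Tj j)) (Pplus (A j))) \<and>
            opeq L (Tj j) (opmul L (opmul L (Pplus (Aout j)) (Pplus (Ain j))) (TP j)) \<and>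
            Aout j \<inter> Ain j = {} \<and> Aout j \<inter> nbhd L X ((9*j-6)*l) = {} \<and>
            Ain j \<inter> nbhd L X ((9*j-6)*l) = {} \<and>
            supp_in L (nbhd L X ((9*j+3)*l)) (Tj j) \<and>
            supp_in L (nbhd L X ((9*j-6)*l)) (TP j))
         \<and> Expect \<mu> L (\<lambda>\<omega>. opnorm L (conjop L (opsub T (opsum Tj {1..k+1}))
                                          (chi L (Ile k Del) (Ham L Del lam \<omega>))))
             \<le> ennreal (C' k * real (card L) ^ (2*k+1) * exp (- m0 * real l))"
      unfolding Let_def using part1[unfolded Tjfun TPfun, unfolded Afun] part2[unfolded Tjfun, unfolded Afun]
      by simp
  qed
qed


end
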